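(* Let $F,f,h_1,\dots,h_p\colon\mathbb R^n\times\mathbb R^m\to\mathbb R$ be continuously differentiable, $X\subset\mathbb R^n$ closed, $I=\{1,\dots,\ell\}$, $J=\{\ell+1,\dots,p\}$, $\Gamma(x):=\{y\mid h_i(x,y)\le0\ (i\in I),\ h_i(x,y)=0\ (i\in J)\}$, $\varphi(x):=\inf\{f(x,y)\mid y\in\Gamma(x)\}$, $S(x):=\operatorname{argmin}\{f(x,y)\mid y\in\Gamma(x)\}$, $h_0(x,y):=f(x,y)-\varphi(x)$, and $\varphi_p(x):=\sup\{F(x,y)\mid y\in S(x)\}$. Assume (A1'): for each $x$, $f(x,\cdot)$ and $h_i(x,\cdot)$, $i\in I$, are convex and $h_i(x,\cdot)$, $i\in J$, are affine. Assume $X\subset\operatorname{dom}\Gamma$, that $\Gamma$ is locally bounded at each point of $X$, that RCPLD$_S$ with respect to $\operatorname{dom}\Gamma$ holds at each point of $\operatorname{gph}S\cap(X\times\mathbb R^m)$, and that $X$ is nonempty and compact. Then there exists a pessimistic solution of the bilevel problem, i.e., a global minimizer of $\varphi_p$ over $X$.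
   Context: $\operatorname{dom}\Gamma:=\{x\mid\Gamma(x)\neq\emptyset\}$; $\inf\emptyset=+\infty$. $\Gamma$ is locally bounded at $\bar x$ if there are a bounded $B$ and a neighborhood $V$ of $\bar x$ with $\Gamma(x)\subset B$ for $x\in V$. A pair of finite families $((a^i)_{i\in I_1},(b^i)_{i\in I_2})$ is positive-linearly dependent if there are $\alpha_i\ge0$, $\beta_i$, not all zero, with $\sum\alpha_ia^i+\sum\beta_ib^i=0$. For $(\bar x,\bar y)\in\operatorname{gph}S$ let $I(\bar x,\bar y):=\{i\in I\mid h_i(\bar x,\bar y)=0\}$ and $\nabla_yh_0:=\nabla_yf$. RCPLD$_S$ holds at $(\bar x,\bar y)$ with respect to $\Omega$ if there are a neighborhood $U$ of $(\bar x,\bar y)$ and $\mathcal S\subset J$ such that: (i) $\{\nabla_yh_i(\bar x,\bar y)\mid i\in\mathcal S\}$ is a basis of the span of $\{\nabla_yh_i(\bar x,\bar y)\mid i\in J\}$; (ii) $(\nabla_yh_i(x,y))_{i\in J}$ has constant rank on $U\cap(\Omega\times\mathbb R^m)$; (iii) for each $K\subset\{0\}\cup I(\bar x,\bar y)$ with $((\nabla_yh_i(\bar x,\bar y))_{i\in K},(\nabla_yh_i(\bar x,\bar y))_{i\in\mathcal S})$ positive-linearly dependent, $(\nabla_yh_i(x,y))_{i\in K\cup\mathcal S}$ is linearly dependent for each $(x,y)\in U\cap(\Omega\times\mathbb R^m)$. *)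

theory Defs
  imports "HOL-Analysis.Analysis"
begin

definition cont_diff :: "('a::real_normed_vector \<Rightarrow> real) \<Rightarrow> bool" where
  "cont_diff g \<longleftrightarrow> (\<exists>g'. (\<forall>z. (g has_derivative blinfun_apply (g' z)) (at z)) \<and> continuous_on UNIV g')"

definition grad_y :: "((real^'n) \<times> (real^'m) \<Rightarrow> real) \<Rightarrow> real^'n \<Rightarrow> real^'m \<Rightarrow> real^'m" where
  "grad_y g x y = (\<chi> j. frechet_derivative g (at (x, y)) (0, axis j 1))"

definition Gam :: "(nat \<Rightarrow> (real^'n) \<times> (real^'m) \<Rightarrow> real) \<Rightarrow> nat \<Rightarrow> nat \<Rightarrow> real^'n \<Rightarrow> (real^'m) set" where
  "Gam h l p x = {y. (\<forall>i\<in>{1..l}. h i (x, y) \<le> 0) \<and> (\<forall>i\<in>{l+1..p}. h i (x, y) = 0)}"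

text \<open>Optimal value function (inf of the empty set is +infinity).\<close>
definition phi :: "((real^'n) \<times> (real^'m) \<Rightarrow> real) \<Rightarrow> (nat \<Rightarrow> (real^'n) \<times> (real^'m) \<Rightarrow> real) \<Rightarrow> nat \<Rightarrow> nat \<Rightarrow> real^'n \<Rightarrow> ereal" where
  "phi f h l p x = Inf ((\<lambda>y. ereal (f (x, y))) ` Gam h l p x)"

definition Sol :: "((real^'n) \<times> (real^'m) \<Rightarrow> real) \<Rightarrow> (nat \<Rightarrow> (real^'n) \<times> (real^'m) \<Rightarrow> real) \<Rightarrow> nat \<Rightarrow> nat \<Rightarrow> real^'n \<Rightarrow> (real^'m) set" where
  "Sol f h l p x = {y \<in> Gam h l p x. ereal (f (x, y)) = phi f h l p x}"

text \<open>Pessimistic value function (sup of the empty set is -infinity).\<close>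
definition phi_p :: "((real^'n) \<times> (real^'m) \<Rightarrow> real) \<Rightarrow> ((real^'n) \<times> (real^'m) \<Rightarrow> real) \<Rightarrow> (nat \<Rightarrow> (real^'n) \<times> (real^'m) \<Rightarrow> real) \<Rightarrow> nat \<Rightarrow> nat \<Rightarrow> real^'n \<Rightarrow> ereal" where
  "phi_p F f h l p x = Sup ((\<lambda>y. ereal (F (x, y))) ` Sol f h l p x)"

definition domG :: "(nat \<Rightarrow> (real^'n) \<times> (real^'m) \<Rightarrow> real) \<Rightarrow> nat \<Rightarrow> nat \<Rightarrow> (real^'n) set" where
  "domG h l p = {x. Gam h l p x \<noteq> {}}"

definition locally_bounded_at :: "('a::topological_space \<Rightarrow> 'b::metric_space set) \<Rightarrow> 'a \<Rightarrow> bool" where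
  "locally_bounded_at G xb \<longleftrightarrow> (\<exists>B V. bounded B \<and> open V \<and> xb \<in> V \<and> (\<forall>x\<in>V. G x \<subseteq> B))"

text \<open>Linear dependence of an indexed finite family (multiplicities matter).\<close>
definition fam_lin_dep :: "'i set \<Rightarrow> ('i \<Rightarrow> 'v::real_vector) \<Rightarrow> bool" where
  "fam_lin_dep A v \<longleftrightarrow> (\<exists>c. (\<exists>i\<in>A. c i \<noteq> 0) \<and> (\<Sum>i\<in>A. c i *\<^sub>R v i) = 0)"

definition pos_lin_dep :: "'i set \<Rightarrow> 'i set \<Rightarrow> ('i \<Rightarrow> 'v::real_vector) \<Rightarrow> bool" where
  "pos_lin_dep A B v \<longleftrightarrow> (\<exists>\<alpha> \<beta>. (\<forall>i\<in>A. \<alpha> i \<ge> 0) \<and> ((\<exists>i\<in>A. \<alpha> i \<noteq> 0) \<or> (\<exists>i\<in>B. \<beta> i \<noteq> 0))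
      \<and> (\<Sum>i\<in>A. \<alpha> i *\<^sub>R v i) + (\<Sum>i\<in>B. \<beta> i *\<^sub>R v i) = 0)"

text \<open>Gradients in y of h_i, with h_0 := f - phi, whose y-gradient is that of f.\<close>
definition gy :: "((real^'n) \<times> (real^'m) \<Rightarrow> real) \<Rightarrow> (nat \<Rightarrow> (real^'n) \<times> (real^'m) \<Rightarrow> real) \<Rightarrow> nat \<Rightarrow> real^'n \<Rightarrow> real^'m \<Rightarrow> real^'m" where
  "gy f h i x y = (if i = 0 then grad_y f x y else grad_y (h i) x y)"

definition RCPLD_S :: "((real^'n) \<times> (real^'m) \<Rightarrow> real) \<Rightarrow> (nat \<Rightarrow> (real^'n) \<times> (real^'m) \<Rightarrow> real) \<Rightarrow> nat \<Rightarrow> nat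
    \<Rightarrow> (real^'n) set \<Rightarrow> real^'n \<Rightarrow> real^'m \<Rightarrow> bool" where
  "RCPLD_S f h l p \<Omega> xb yb \<longleftrightarrow>
    (\<exists>U \<S>. open U \<and> (xb, yb) \<in> U \<and> \<S> \<subseteq> {l+1..p} \<and>
      \<not> fam_lin_dep \<S> (\<lambda>i. gy f h i xb yb) \<and>
      span ((\<lambda>i. gy f h i xb yb) ` \<S>) = span ((\<lambda>i. gy f h i xb yb) ` {l+1..p}) \<and>
      (\<forall>x y. (x, y) \<in> U \<and> x \<in> \<Omega> \<longrightarrow>
          dim ((\<lambda>i. gy f h i x y) ` {l+1..p}) = dim ((\<lambda>i. gy f h i xb yb) ` {l+1..p})) \<and>
      (\<forall>K. K \<subseteq> {0} \<union> {i\<in>{1..l}. h i (xb, yb) = 0} \<longrightarrow>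
          pos_lin_dep K \<S> (\<lambda>i. gy f h i xb yb) \<longrightarrow>
          (\<forall>x y. (x, y) \<in> U \<and> x \<in> \<Omega> \<longrightarrow> fam_lin_dep (K \<union> \<S>) (\<lambda>i. gy f h i x y))))"

end

theory Submission
  imports Defs
begin

lemma finite_subseq:
  fixes X :: "nat \<Rightarrow> 'i \<Rightarrow> real"
  assumes "finite I" "\<forall>k. \<forall>i\<in>I. \<bar>X k i\<bar> \<le> B"
  shows "\<exists>r L. strict_mono r \<and> (\<forall>i\<in>I. (\<lambda>k. X (r k) i) \<longlonglongrightarrow> L i)"
  using assms(1) assms(2)
proof (induction I rule: finite_induct)
  case empty
  show ?case by (intro exI[of _ "\<lambda>n::nat. n"]) (simp add: strict_mono_def)
next
  case (insert i I)
  have bI: "\<forall>k. \<forall>i\<in>I. \<bar>X k i\<bar> \<le> B" using insert.prems by simp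
  obtain r L where r: "strict_mono r" "\<forall>j\<in>I. (\<lambda>k. X (r k) j) \<longlonglongrightarrow> L j" using insert.IH[OF bI] by blast
  have "\<forall>x\<in>range (\<lambda>k. X (r k) i). \<bar>x\<bar> \<le> B" using insert.prems by simp
  then have "bounded (range (\<lambda>k. X (r k) i))"
    unfolding bounded_real by (intro exI[of _ B])
  from bounded_imp_convergent_subsequence[OF this] obtain l r' where r': "strict_mono r'" "((\<lambda>k. X (r k) i) \<circ> r') \<longlonglongrightarrow> l"
    by blast
  have "strict_mono (r \<circ> r')" using r r' by (simp add: strict_mono_o)
  moreover have "\<forall>j\<in>insert i I. (\<lambda>k. X ((r \<circ> r') k) j) \<longlonglongrightarrow> (L(i := l)) j"
  proof
    fix j assume "j \<in> insert i I"
    then show "(\<lambda>k. X ((r \<circ> r') k) j) \<longlonglongrightarrow> (L(i := l)) j"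
    proof
      assume "j = i" then show ?thesis using r' by (simp add: o_def)
    next
      assume "j \<in> I"
      then have "((\<lambda>k. X (r k) j) \<circ> r') \<longlonglongrightarrow> L j" using r(2) LIMSEQ_subseq_LIMSEQ[OF _ r'(1)] by blast
      moreover have "i \<noteq> j" using \<open>j \<in> I\<close> insert.hyps by blast
      ultimately show ?thesis by (simp add: o_def)
    qed
  qed
  ultimately show ?case by (intro exI[of _ "r \<circ> r'"] exI[of _ "L(i := l)"] conjI)
qed

lemma freq_subseq:
  assumes "frequently P sequentially"
  shows "\<exists>r::nat\<Rightarrow>nat. strict_mono r \<and> (\<forall>n. P (r n))"
proof -
  have f: "frequently P cofinite" using assms by (simp only: cofinite_eq_sequentially)
  have "infinite {n. P n}" using frequently_cofinite[of P] f by simp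
  from infinite_enumerate[OF this] obtain r :: "nat \<Rightarrow> nat" where "strict_mono r" "\<forall>n. r n \<in> {n. P n}" by blast
  then show ?thesis by auto
qed

lemma eventually_subseq:
  assumes "eventually P sequentially" "strict_mono r"
  shows "eventually (\<lambda>k. P (r k)) sequentially"
  using assms filterlim_subseq eventually_compose_filterlim by blast

lemma DERIV_maxsq: "((\<lambda>t. (max t 0)\<^sup>2) has_real_derivative 2 * max t (0::real)) (at t)"
proof (cases "t = 0")
  case True
  have "((\<lambda>y. ((max y 0)\<^sup>2 - (max 0 0)\<^sup>2) / (y - 0)) \<longlongrightarrow> (0::real)) (at 0)"
  proof (rule Lim_null_comparison)
    show "\<forall>\<^sub>F y in at 0. norm (((max y 0)\<^sup>2 - (max 0 0)\<^sup>2) / (y - 0)) \<le> \<bar>y\<bar>"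
    proof (rule always_eventually, rule allI)
      fix y :: real
      show "norm (((max y 0)\<^sup>2 - (max 0 0)\<^sup>2) / (y - 0)) \<le> \<bar>y\<bar>"
        by (cases "y \<ge> 0") (auto simp: power2_eq_square abs_mult)
    qed
    show "((\<lambda>y::real. \<bar>y\<bar>) \<longlongrightarrow> 0) (at 0)"
      using tendsto_rabs[OF tendsto_ident_at[of "0::real" UNIV]] by simp
  qed
  then show ?thesis using True by (simp add: has_field_derivative_iff)
next
  case False
  show ?thesis
  proof (cases "t > 0")
    case True
    have "((\<lambda>t. t\<^sup>2) has_real_derivative 2 * max t 0) (at t)"
      using True by (auto intro!: derivative_eq_intros)
    then show ?thesis
      apply (rule has_field_derivative_transform_within_open[where S="{0<..}"])
      using True by auto
  next
    case f2: False
    then have "t < 0" using False by auto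
    have "((\<lambda>t. 0) has_real_derivative 2 * max t 0) (at t)" using \<open>t < 0\<close> by simp
    then show ?thesis
      apply (rule has_field_derivative_transform_within_open[where S="{..<0}"])
      using \<open>t < 0\<close> by auto
  qed
qed

lemma tangent_ineq:
  fixes g :: "'a::real_inner \<Rightarrow> real"
  assumes cv: "convex_on UNIV g" and d: "(g has_derivative (\<lambda>v. a \<bullet> v)) (at w)"
  shows "g w + a \<bullet> (u - w) \<le> g u"
proof -
  define \<phi> where "\<phi> = (\<lambda>t::real. g (w + t *\<^sub>R (u - w)))"
  have cphi: "convex_on UNIV \<phi>"
  proof (rule convex_onI)
    fix t x y :: real assume "t > 0" "t < 1"
    have "w + ((1 - t) *\<^sub>R x + t *\<^sub>R y) *\<^sub>R (u - w) = (1 - t) *\<^sub>R (w + x *\<^sub>R (u - w)) + t *\<^sub>R (w + y *\<^sub>R (u - w))"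
      by (simp add: algebra_simps)
    then show "\<phi> ((1 - t) *\<^sub>R x + t *\<^sub>R y) \<le> (1 - t) * \<phi> x + t * \<phi> y"
      unfolding \<phi>_def using convex_onD[OF cv, of t] \<open>t > 0\<close> \<open>t < 1\<close> by simp
  qed simp
  have "((\<lambda>t::real. w + t *\<^sub>R (u - w)) has_derivative (\<lambda>t. t *\<^sub>R (u - w))) (at 0)"
    by (auto intro!: derivative_eq_intros)
  moreover have "(g has_derivative (\<lambda>v. a \<bullet> v)) (at (w + 0 *\<^sub>R (u - w)))" using d by simp
  ultimately have "((\<lambda>t. g (w + t *\<^sub>R (u - w))) has_derivative (\<lambda>t. a \<bullet> (t *\<^sub>R (u - w)))) (at 0)"
    by (rule has_derivative_compose)
  then have "(\<phi> has_derivative (\<lambda>t. a \<bullet> (t *\<^sub>R (u - w)))) (at 0)"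
    unfolding \<phi>_def by (simp add: o_def)
  then have "(\<phi> has_field_derivative (a \<bullet> (u - w))) (at 0 within UNIV)"
    unfolding has_field_derivative_def by (simp add: mult.commute[of _ "a \<bullet> (u - w)"])
  from convex_on_imp_above_tangent[OF cphi _ _ _ this, of 1]
  have "\<phi> 1 - \<phi> 0 \<ge> a \<bullet> (u - w) * (1 - 0)" by simp
  then show ?thesis unfolding \<phi>_def by simp
qed


lemma dep_convex:
  fixes val :: "nat \<Rightarrow> 'b::real_inner \<Rightarrow> real" and G :: "nat \<Rightarrow> 'b"
  assumes fin: "finite K" "finite S" and disj: "K \<inter> S = {}"
    and cv: "\<forall>i\<in>K. convex_on UNIV (val i)"
    and dv: "\<forall>i\<in>K. (val i has_derivative (\<lambda>v. G i \<bullet> v)) (at w)"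
    and aff: "\<forall>j\<in>S. val j w - val j u = G j \<bullet> (w - u)"
    and epos: "\<forall>i\<in>K. e i \<ge> 0"
    and dep: "(\<Sum>i\<in>K \<union> S. e i *\<^sub>R G i) = 0"
    and fu: "\<forall>i\<in>K. val i u \<le> 0" "\<forall>j\<in>S. val j u = 0"
  shows "(\<Sum>i\<in>K. e i * val i w) + (\<Sum>j\<in>S. e j * val j w) \<le> 0"
proof -
  have "0 = (\<Sum>i\<in>K \<union> S. e i *\<^sub>R G i) \<bullet> (u - w)" using dep by simp
  also have "\<dots> = (\<Sum>i\<in>K. e i * (G i \<bullet> (u - w))) + (\<Sum>j\<in>S. e j * (G j \<bullet> (u - w)))"
    using fin disj by (simp add: sum.union_disjoint inner_sum_left inner_add_left)
  also have "(\<Sum>i\<in>K. e i * (G i \<bullet> (u - w))) \<le> (\<Sum>i\<in>K. e i * (- val i w))"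
  proof (rule sum_mono)
    fix i assume i: "i \<in> K"
    have "val i w + G i \<bullet> (u - w) \<le> val i u"
      using tangent_ineq cv dv i by blast
    then have "G i \<bullet> (u - w) \<le> - val i w" using fu i by auto
    then show "e i * (G i \<bullet> (u - w)) \<le> e i * (- val i w)"
      by (rule mult_left_mono) (use epos i in auto)
  qed
  also have "(\<Sum>j\<in>S. e j * (G j \<bullet> (u - w))) = (\<Sum>j\<in>S. e j * (- val j w))"
  proof (rule sum.cong)
    fix j assume j: "j \<in> S"
    have "G j \<bullet> (u - w) = - (G j \<bullet> (w - u))" by (simp add: inner_diff_right)
    then show "e j * (G j \<bullet> (u - w)) = e j * (- val j w)" using aff fu j by auto
  qed simp
  finally show ?thesis by (simp add: sum_negf)
qed

lemma S_zero:
  fixes Gs :: "nat \<Rightarrow> 'b::real_vector"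
  assumes fin: "finite A" "finite S" and disj: "A \<inter> S = {}"
    and indep: "\<not> fam_lin_dep S Gs"
    and dA: "\<forall>i\<in>A. d i = 0" and ds: "(\<Sum>i\<in>A \<union> S. d i *\<^sub>R Gs i) = 0"
  shows "\<forall>j\<in>S. d j = 0"
proof -
  have "(\<Sum>i\<in>A \<union> S. d i *\<^sub>R Gs i) = (\<Sum>i\<in>A. d i *\<^sub>R Gs i) + (\<Sum>i\<in>S. d i *\<^sub>R Gs i)"
    using fin disj by (simp add: sum.union_disjoint)
  then have "(\<Sum>i\<in>S. d i *\<^sub>R Gs i) = 0" using dA ds by simp
  then show ?thesis using indep unfolding fam_lin_dep_def by blast
qed

lemma minsupp:
  fixes Gs :: "nat \<Rightarrow> 'b::real_vector" and l :: "nat \<Rightarrow> real"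
  assumes fin: "finite A" "finite S" and disj: "A \<inter> S = {}"
    and indep: "\<not> fam_lin_dep S Gs"
    and c0: "\<forall>i\<in>A. c0 i \<ge> 0 \<and> (c0 i \<noteq> 0 \<longrightarrow> Q i)" "(\<Sum>i\<in>A \<union> S. c0 i *\<^sub>R Gs i) = 0"
            "(\<Sum>i\<in>A \<union> S. c0 i * l i) > 0"
  shows "\<exists>c K. K \<subseteq> A \<and> K \<noteq> {} \<and> (\<forall>i\<in>K. c i > 0 \<and> Q i) \<and> (\<forall>i\<in>A - K. c i = 0)
     \<and> (\<Sum>i\<in>A \<union> S. c i *\<^sub>R Gs i) = 0 \<and> (\<Sum>i\<in>A \<union> S. c i * l i) > 0
     \<and> (\<forall>d. (\<forall>i\<in>A - K. d i = 0) \<and> (\<Sum>i\<in>A \<union> S. d i *\<^sub>R Gs i) = 0 \<longrightarrow> (\<exists>t. \<forall>i\<in>A \<union> S. d i = t * c i))"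
proof -
  define D where "D c \<longleftrightarrow> (\<forall>i\<in>A. c i \<ge> 0 \<and> (c i \<noteq> 0 \<longrightarrow> Q i)) \<and> (\<Sum>i\<in>A \<union> S. c i *\<^sub>R Gs i) = 0
      \<and> (\<Sum>i\<in>A \<union> S. c i * l i) > 0" for c
  have "D c0" using c0 by (simp add: D_def)
  then obtain c where Dc: "D c" and minc: "\<And>c'. D c' \<Longrightarrow> card {i\<in>A. c i \<noteq> 0} \<le> card {i\<in>A. c' i \<noteq> 0}"
    using ex_has_least_nat[of D c0 "\<lambda>c. card {i\<in>A. c i \<noteq> 0}"] by blast
  define K where "K = {i\<in>A. c i \<noteq> 0}"
  have KA: "K \<subseteq> A" and finK: "finite K" using fin by (auto simp: K_def)
  have cpos: "\<forall>i\<in>K. c i > 0 \<and> Q i" using Dc unfolding D_def K_def by force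
  have cz: "\<forall>i\<in>A - K. c i = 0" by (auto simp: K_def)
  have csum: "(\<Sum>i\<in>A \<union> S. c i *\<^sub>R Gs i) = 0" and cl: "(\<Sum>i\<in>A \<union> S. c i * l i) > 0"
    using Dc by (auto simp: D_def)
  have Kne: "K \<noteq> {}"
  proof
    assume "K = {}"
    then have cA: "\<forall>i\<in>A. c i = 0" using cz by auto
    then have "\<forall>j\<in>S. c j = 0" using S_zero[OF fin disj indep cA csum] by blast
    with cA have "(\<Sum>i\<in>A \<union> S. c i * l i) = 0" by (intro sum.neutral) auto
    with cl show False by simp
  qed
  have ker: "\<exists>t. \<forall>i\<in>A \<union> S. d i = t * c i"
    if dz: "\<forall>i\<in>A - K. d i = 0" and ds: "(\<Sum>i\<in>A \<union> S. d i *\<^sub>R Gs i) = 0" for d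
  proof -
    define v0 where "v0 = (\<Sum>i\<in>A \<union> S. c i * l i)"
    define t0 where "t0 = (\<Sum>i\<in>A \<union> S. d i * l i) / v0"
    define d' where "d' i = d i - t0 * c i" for i
    have v0: "v0 > 0" using cl by (simp add: v0_def)
    have d'z: "\<forall>i\<in>A - K. d' i = 0" using dz cz by (simp add: d'_def)
    have "(\<Sum>i\<in>A \<union> S. d' i *\<^sub>R Gs i) = (\<Sum>i\<in>A \<union> S. d i *\<^sub>R Gs i) - t0 *\<^sub>R (\<Sum>i\<in>A \<union> S. c i *\<^sub>R Gs i)"
      by (simp add: d'_def scaleR_diff_left sum_subtractf scaleR_sum_right)
    then have d's: "(\<Sum>i\<in>A \<union> S. d' i *\<^sub>R Gs i) = 0" using ds csum by simp
    have d'l: "(\<Sum>i\<in>A \<union> S. d' i * l i) = 0"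
    proof -
      have "(\<Sum>i\<in>A \<union> S. d' i * l i) = (\<Sum>i\<in>A \<union> S. d i * l i) - t0 * v0"
        by (simp add: d'_def left_diff_distrib sum_subtractf sum_distrib_left v0_def mult.assoc)
      then show ?thesis using v0 by (simp add: t0_def)
    qed
    show ?thesis
    proof (cases "\<forall>i\<in>K. d' i = 0")
      case True
      then have d'A: "\<forall>i\<in>A. d' i = 0" using d'z by blast
      then have "\<forall>j\<in>S. d' j = 0" using S_zero[OF fin disj indep d'A d's] by blast
      with d'A have "\<forall>i\<in>A \<union> S. d i = t0 * c i" by (auto simp: d'_def)
      then show ?thesis by blast
    next
      case False
      define e where "e = (if (\<exists>i\<in>K. d' i < 0) then d' else (\<lambda>i. - d' i))"
      have eneg: "\<exists>i\<in>K. e i < 0"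
      proof (cases "\<exists>i\<in>K. d' i < 0")
        case True then show ?thesis by (simp add: e_def)
      next
        case f: False
        then obtain i where "i \<in> K" "d' i > 0" using False by force
        then show ?thesis using f by (auto simp: e_def)
      qed
      have ez: "\<forall>i\<in>A - K. e i = 0" using d'z by (simp add: e_def)
      have es: "(\<Sum>i\<in>A \<union> S. e i *\<^sub>R Gs i) = 0" using d's by (simp add: e_def sum_negf)
      have el: "(\<Sum>i\<in>A \<union> S. e i * l i) = 0" using d'l by (simp add: e_def sum_negf)
      define M where "M = {i\<in>K. e i < 0}"
      have finM: "finite M" and Mne: "M \<noteq> {}" using finK eneg by (auto simp: M_def)
      define \<tau> where "\<tau> = Min ((\<lambda>i. c i / (- e i)) ` M)"
      have "\<tau> \<in> (\<lambda>i. c i / (- e i)) ` M" unfolding \<tau>_def using finM Mne by (intro Min_in) auto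
      then obtain i1 where i1: "i1 \<in> M" "\<tau> = c i1 / (- e i1)" by blast
      have taule: "\<tau> \<le> c i / (- e i)" if "i \<in> M" for i
        unfolding \<tau>_def using finM that by auto
      have ci1: "c i1 > 0" and ei1: "- e i1 > 0" using i1 cpos by (auto simp: M_def)
      have taupos: "\<tau> > 0" unfolding i1(2) using ci1 ei1 by (rule divide_pos_pos)
      define c2 where "c2 i = c i + \<tau> * e i" for i
      have "D c2"
        unfolding D_def
      proof (intro conjI ballI)
        fix i assume iA: "i \<in> A"
        show "c2 i \<ge> 0"
        proof (cases "i \<in> K")
          case False then show ?thesis using iA cz ez by (simp add: c2_def)
        next
          case True
          show ?thesis
          proof (cases "e i < 0")
            case True
            have tl: "\<tau> \<le> c i / (- e i)" using taule[of i] \<open>i \<in> K\<close> True unfolding M_def by blast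
            have ne: "- e i > 0" using True by simp
            have "\<tau> * (- e i) \<le> c i / (- e i) * (- e i)" using mult_right_mono[OF tl less_imp_le[OF ne]] .
            also have "\<dots> = c i" using ne by simp
            finally have "\<tau> * (- e i) \<le> c i" .
            then show ?thesis by (simp add: c2_def)
          next
            case False
            have "c i > 0" using cpos \<open>i \<in> K\<close> by blast
            moreover have "\<tau> * e i \<ge> 0" using False taupos by simp
            ultimately show ?thesis by (simp add: c2_def)
          qed
        qed
        show "c2 i \<noteq> 0 \<longrightarrow> Q i"
          using iA cz ez cpos by (cases "i \<in> K") (auto simp: c2_def)
      next
        have "(\<Sum>i\<in>A \<union> S. c2 i *\<^sub>R Gs i) = (\<Sum>i\<in>A \<union> S. c i *\<^sub>R Gs i) + \<tau> *\<^sub>R (\<Sum>i\<in>A \<union> S. e i *\<^sub>R Gs i)"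
          by (simp add: c2_def scaleR_add_left sum.distrib scaleR_sum_right)
        then show "(\<Sum>i\<in>A \<union> S. c2 i *\<^sub>R Gs i) = 0" using csum es by simp
        have "(\<Sum>i\<in>A \<union> S. c2 i * l i) = (\<Sum>i\<in>A \<union> S. c i * l i) + \<tau> * (\<Sum>i\<in>A \<union> S. e i * l i)"
          by (simp add: c2_def distrib_right sum.distrib sum_distrib_left mult.assoc)
        then show "(\<Sum>i\<in>A \<union> S. c2 i * l i) > 0" using el cl by simp
      qed
      have sub: "{i\<in>A. c2 i \<noteq> 0} \<subseteq> K - {i1}"
      proof
        fix i assume i: "i \<in> {i\<in>A. c2 i \<noteq> 0}"
        have "i \<in> K"
        proof (rule ccontr)
          assume "i \<notin> K"
          then have "c i = 0" "e i = 0" using i cz ez by auto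
          then show False using i by (simp add: c2_def)
        qed
        moreover have "i \<noteq> i1"
        proof
          assume "i = i1"
          have "e i1 < 0" using i1 by (simp add: M_def)
          then have "c2 i1 = 0" using i1 by (simp add: c2_def)
          then show False using i \<open>i = i1\<close> by simp
        qed
        ultimately show "i \<in> K - {i1}" by simp
      qed
      have "i1 \<in> K" using i1 by (simp add: M_def)
      then have "card (K - {i1}) < card K" by (rule card_Diff1_less[OF finK])
      then have "card {i\<in>A. c2 i \<noteq> 0} < card K"
        using card_mono[OF _ sub] finK by fastforce
      moreover have "card K \<le> card {i\<in>A. c2 i \<noteq> 0}" using minc[OF \<open>D c2\<close>] by (simp add: K_def)
      ultimately show ?thesis by simp
    qed
  qed
  show ?thesis
    apply (rule exI[of _ c], rule exI[of _ K])
    using KA Kne cpos cz csum cl ker by blast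
qed

lemma grad_V:
  fixes vi :: "nat \<Rightarrow> 'b::real_inner \<Rightarrow> real" and Gi :: "nat \<Rightarrow> 'b"
  assumes fin: "finite A" "finite J"
    and dv: "\<forall>i\<in>A \<union> J. (vi i has_derivative (\<lambda>v. Gi i \<bullet> v)) (at w)"
    and Pdef: "P = (\<lambda>y. (\<Sum>i\<in>A. (max (vi i y) 0)\<^sup>2) + (\<Sum>j\<in>J. (vi j y)\<^sup>2))"
    and Ppos: "P w > 0"
    and min: "\<forall>y. sqrt (P w) + (w - yb) \<bullet> (w - yb) \<le> sqrt (P y) + (y - yb) \<bullet> (y - yb)"
  shows "(\<Sum>i\<in>A. (max (vi i w) 0 / sqrt (P w)) *\<^sub>R Gi i) + (\<Sum>j\<in>J. (vi j w / sqrt (P w)) *\<^sub>R Gi j) = - (2 *\<^sub>R (w - yb))"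
proof -
  define DP where "DP v = (\<Sum>i\<in>A. 2 * max (vi i w) 0 * (Gi i \<bullet> v)) + (\<Sum>j\<in>J. 2 * vi j w * (Gi j \<bullet> v))" for v
  have dA: "((\<lambda>y. (max (vi i y) 0)\<^sup>2) has_derivative (\<lambda>v. 2 * max (vi i w) 0 * (Gi i \<bullet> v))) (at w)"
    if "i \<in> A" for i
  proof -
    have d1: "(vi i has_derivative (\<lambda>v. Gi i \<bullet> v)) (at w)" using dv that by blast
    have "((\<lambda>t. (max t 0)\<^sup>2) has_derivative (*) (2 * max (vi i w) 0)) (at (vi i w))"
      using DERIV_maxsq[of "vi i w"] unfolding has_field_derivative_def .
    from has_derivative_compose[OF d1 this] show ?thesis by simp
  qed
  have dJ: "((\<lambda>y. (vi j y)\<^sup>2) has_derivative (\<lambda>v. 2 * vi j w * (Gi j \<bullet> v))) (at w)"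
    if "j \<in> J" for j
  proof -
    have d1: "(vi j has_derivative (\<lambda>v. Gi j \<bullet> v)) (at w)" using dv that by blast
    have "((\<lambda>t::real. t\<^sup>2) has_real_derivative (2 * vi j w)) (at (vi j w))"
      by (auto intro!: derivative_eq_intros)
    then have "((\<lambda>t::real. t\<^sup>2) has_derivative (*) (2 * vi j w)) (at (vi j w))"
      unfolding has_field_derivative_def .
    from has_derivative_compose[OF d1 this] show ?thesis by simp
  qed
  have dP: "(P has_derivative DP) (at w)"
    unfolding Pdef DP_def
    by (intro has_derivative_add has_derivative_sum) (auto intro: dA dJ)
  have "(sqrt has_derivative (*) (inverse (sqrt (P w)) / 2)) (at (P w))"
    using DERIV_real_sqrt[OF Ppos] unfolding has_field_derivative_def .
  from has_derivative_compose[OF dP this]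
  have dV: "((\<lambda>y. sqrt (P y)) has_derivative (\<lambda>v. inverse (sqrt (P w)) / 2 * DP v)) (at w)" .
  have dq: "((\<lambda>y. (y - yb) \<bullet> (y - yb)) has_derivative (\<lambda>v. (w - yb) \<bullet> v + v \<bullet> (w - yb))) (at w)"
  proof -
    have "((\<lambda>y. y - yb) has_derivative (\<lambda>v. v)) (at w)"
      using has_derivative_diff[OF has_derivative_ident has_derivative_const] by simp
    from has_derivative_inner[OF this this] show ?thesis .
  qed
  have dT: "((\<lambda>y. sqrt (P y) + (y - yb) \<bullet> (y - yb)) has_derivative
      (\<lambda>v. inverse (sqrt (P w)) / 2 * DP v + ((w - yb) \<bullet> v + v \<bullet> (w - yb)))) (at w)"
    by (rule has_derivative_add[OF dV dq])
  have zero: "(\<lambda>v. inverse (sqrt (P w)) / 2 * DP v + ((w - yb) \<bullet> v + v \<bullet> (w - yb))) = (\<lambda>v. 0)"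
    by (rule differential_zero_maxmin[OF _ open_UNIV dT]) (use min in auto)
  define u where "u = (\<Sum>i\<in>A. (max (vi i w) 0 / sqrt (P w)) *\<^sub>R Gi i) + (\<Sum>j\<in>J. (vi j w / sqrt (P w)) *\<^sub>R Gi j)"
  have uv: "u \<bullet> v = inverse (sqrt (P w)) / 2 * DP v" for v
  proof -
    have "u \<bullet> v = (\<Sum>i\<in>A. (max (vi i w) 0 / sqrt (P w)) * (Gi i \<bullet> v)) + (\<Sum>j\<in>J. (vi j w / sqrt (P w)) * (Gi j \<bullet> v))"
      unfolding u_def by (simp add: inner_add_left inner_sum_left)
    also have "\<dots> = inverse (sqrt (P w)) / 2 * DP v"
      unfolding DP_def by (simp add: distrib_left sum_distrib_left field_simps)
    finally show ?thesis .
  qed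
  have "(u + 2 *\<^sub>R (w - yb)) \<bullet> v = 0" for v
  proof -
    have "inverse (sqrt (P w)) / 2 * DP v + ((w - yb) \<bullet> v + v \<bullet> (w - yb)) = 0"
      using fun_cong[OF zero, of v] by simp
    then have "u \<bullet> v + ((w - yb) \<bullet> v + v \<bullet> (w - yb)) = 0" using uv[of v] by simp
    moreover have "(u + 2 *\<^sub>R (w - yb)) \<bullet> v = u \<bullet> v + 2 * ((w - yb) \<bullet> v)" by (simp add: inner_add_left)
    moreover have "v \<bullet> (w - yb) = (w - yb) \<bullet> v" by (rule inner_commute)
    ultimately show ?thesis by linarith
  qed
  from this[of "u + 2 *\<^sub>R (w - yb)"] have "u + 2 *\<^sub>R (w - yb) = 0" by simp
  then show ?thesis unfolding u_def[symmetric] by (simp add: eq_neg_iff_add_eq_0)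
qed

lemma span_fam:
  fixes f :: "nat \<Rightarrow> 'b::real_vector"
  assumes "finite S" "x \<in> span (f ` S)"
  shows "\<exists>c. x = (\<Sum>i\<in>S. c i *\<^sub>R f i)"
  using assms
proof (induction S arbitrary: x rule: finite_induct)
  case empty
  then show ?case by simp
next
  case (insert i S)
  have "x \<in> span (insert (f i) (f ` S))" using insert.prems by simp
  then obtain k where "x - k *\<^sub>R f i \<in> span (f ` S)" unfolding span_insert by blast
  from insert.IH[OF this] obtain c where c: "x - k *\<^sub>R f i = (\<Sum>j\<in>S. c j *\<^sub>R f j)" by blast
  have "(\<Sum>j\<in>insert i S. (c(i := k)) j *\<^sub>R f j) = k *\<^sub>R f i + (\<Sum>j\<in>S. (c(i := k)) j *\<^sub>R f j)"
    using insert.hyps by simp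
  also have "(\<Sum>j\<in>S. (c(i := k)) j *\<^sub>R f j) = (\<Sum>j\<in>S. c j *\<^sub>R f j)"
    using insert.hyps by (intro sum.cong) auto
  finally have "(\<Sum>j\<in>insert i S. (c(i := k)) j *\<^sub>R f j) = x" using c by (simp add: algebra_simps)
  then show ?case by metis
qed

lemma norm_dep:
  fixes v :: "nat \<Rightarrow> 'b::real_vector"
  assumes fin: "finite I" and dep: "fam_lin_dep I v"
  shows "\<exists>e. (\<Sum>i\<in>I. \<bar>e i\<bar>) = 1 \<and> (\<Sum>i\<in>I. e i *\<^sub>R v i) = 0 \<and> (\<Sum>i\<in>I. e i * c i) \<ge> 0"
proof -
  obtain e0 where e0: "\<exists>i\<in>I. e0 i \<noteq> 0" "(\<Sum>i\<in>I. e0 i *\<^sub>R v i) = 0"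
    using dep unfolding fam_lin_dep_def by blast
  define s where "s = (\<Sum>i\<in>I. \<bar>e0 i\<bar>)"
  have spos: "s > 0"
  proof -
    obtain i where "i \<in> I" "e0 i \<noteq> 0" using e0 by blast
    then have "\<bar>e0 i\<bar> \<le> s" unfolding s_def using fin by (intro member_le_sum) auto
    then show ?thesis using \<open>e0 i \<noteq> 0\<close> by simp
  qed
  define \<sigma> :: real where "\<sigma> = (if (\<Sum>i\<in>I. e0 i * c i) \<ge> 0 then 1 else -1)"
  define e where "e i = \<sigma> * e0 i / s" for i
  have "\<bar>\<sigma>\<bar> = 1" by (simp add: \<sigma>_def)
  then have "(\<Sum>i\<in>I. \<bar>e i\<bar>) = (\<Sum>i\<in>I. \<bar>e0 i\<bar>) / s"
    unfolding e_def using spos by (simp add: abs_mult sum_divide_distrib)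
  then have 1: "(\<Sum>i\<in>I. \<bar>e i\<bar>) = 1" using spos by (simp add: s_def)
  have "(\<Sum>i\<in>I. e i *\<^sub>R v i) = (\<sigma> / s) *\<^sub>R (\<Sum>i\<in>I. e0 i *\<^sub>R v i)"
    unfolding e_def by (simp add: scaleR_sum_right)
  then have 2: "(\<Sum>i\<in>I. e i *\<^sub>R v i) = 0" using e0 by simp
  have "(\<Sum>i\<in>I. e i * c i) = (\<sigma> / s) * (\<Sum>i\<in>I. e0 i * c i)"
    unfolding e_def by (simp add: sum_distrib_left mult.assoc)
  moreover have "\<sigma> * (\<Sum>i\<in>I. e0 i * c i) \<ge> 0" by (simp add: \<sigma>_def)
  ultimately have 3: "(\<Sum>i\<in>I. e i * c i) \<ge> 0" using spos
    by (metis divide_nonneg_pos mult.commute times_divide_eq_right)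
  show ?thesis using 1 2 3 by blast
qed

lemma core:
  fixes val :: "nat \<Rightarrow> nat \<Rightarrow> 'b::euclidean_space \<Rightarrow> real" and G :: "nat \<Rightarrow> nat \<Rightarrow> 'b \<Rightarrow> 'b"
    and Gs :: "nat \<Rightarrow> 'b" and yb :: 'b
  assumes finA: "finite A" and finJ: "finite J" and SJ: "S \<subseteq> J" and disj: "A \<inter> J = {}" and ActA: "Act \<subseteq> A"
    and dv: "\<forall>k. \<forall>i\<in>A \<union> J. \<forall>y. (val k i has_derivative (\<lambda>v. G k i y \<bullet> v)) (at y)"
    and cv: "\<forall>k. \<forall>i\<in>A. convex_on UNIV (val k i)"
    and aff: "\<forall>k. \<forall>j\<in>J. \<forall>y z. val k j y - val k j z = G k j y \<bullet> (y - z)"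
    and feas: "\<forall>k. \<exists>u. (\<forall>i\<in>A. val k i u \<le> 0) \<and> (\<forall>j\<in>J. val k j u = 0)"
    and limI: "\<forall>i\<in>A. \<forall>e>0. eventually (\<lambda>k. val k i yb < e) sequentially"
    and limJ: "\<forall>j\<in>J. (\<lambda>k. val k j yb) \<longlonglongrightarrow> 0"
    and Gc: "\<forall>i\<in>A \<union> J. \<forall>ys. ys \<longlonglongrightarrow> yb \<longrightarrow> (\<lambda>k. G k i (ys k)) \<longlonglongrightarrow> Gs i"
    and inact: "\<forall>i\<in>A - Act. \<forall>ys. ys \<longlonglongrightarrow> yb \<longrightarrow> eventually (\<lambda>k. val k i (ys k) < 0) sequentially"
    and indep: "\<not> fam_lin_dep S Gs"
    and spanJS: "\<forall>ys. ys \<longlonglongrightarrow> yb \<longrightarrow> eventually (\<lambda>k. span ((\<lambda>j. G k j (ys k)) ` J) \<subseteq> span ((\<lambda>j. G k j (ys k)) ` S)) sequentially"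
    and rc: "\<forall>K. K \<subseteq> Act \<longrightarrow> pos_lin_dep K S Gs \<longrightarrow>
              (\<forall>ys. ys \<longlonglongrightarrow> yb \<longrightarrow> eventually (\<lambda>k. fam_lin_dep (K \<union> S) (\<lambda>i. G k i (ys k))) sequentially)"
    and eps: "\<epsilon> > 0"
    and nofeas: "\<forall>k y. (\<forall>i\<in>A. val k i y \<le> 0) \<and> (\<forall>j\<in>J. val k j y = 0) \<longrightarrow> \<epsilon> \<le> dist y yb"
  shows False
proof -
  have finS: "finite S" using finite_subset[OF SJ finJ] .
  have disjS: "A \<inter> S = {}" using disj SJ by blast
  define P where "P k y = (\<Sum>i\<in>A. (max (val k i y) 0)\<^sup>2) + (\<Sum>j\<in>J. (val k j y)\<^sup>2)" for k y
  define V where "V k y = sqrt (P k y)" for k y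
  define \<theta> where "\<theta> k y = V k y + (y - yb) \<bullet> (y - yb)" for k y
  have Pnn: "P k y \<ge> 0" for k y unfolding P_def by (intro add_nonneg_nonneg sum_nonneg) auto
  have Vnn: "V k y \<ge> 0" for k y unfolding V_def using Pnn by simp
  have PgeA: "(max (val k i y) 0)\<^sup>2 \<le> P k y" if "i \<in> A" for k i y
  proof -
    have "(max (val k i y) 0)\<^sup>2 \<le> (\<Sum>i\<in>A. (max (val k i y) 0)\<^sup>2)"
      using finA that by (intro member_le_sum) auto
    moreover have "(\<Sum>j\<in>J. (val k j y)\<^sup>2) \<ge> 0" by (intro sum_nonneg) auto
    ultimately show ?thesis unfolding P_def by linarith
  qed
  have PgeJ: "(val k j y)\<^sup>2 \<le> P k y" if "j \<in> J" for k j y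
  proof -
    have "(val k j y)\<^sup>2 \<le> (\<Sum>j\<in>J. (val k j y)\<^sup>2)"
      using finJ that by (intro member_le_sum) auto
    moreover have "(\<Sum>i\<in>A. (max (val k i y) 0)\<^sup>2) \<ge> 0" by (intro sum_nonneg) auto
    ultimately show ?thesis unfolding P_def by linarith
  qed
  have maxleV: "max (val k i y) 0 \<le> V k y" if "i \<in> A" for k i y
    using real_sqrt_le_mono[OF PgeA[OF that, of k y]] unfolding V_def by simp
  have absleV: "\<bar>val k j y\<bar> \<le> V k y" if "j \<in> J" for k j y
    using real_sqrt_le_mono[OF PgeJ[OF that, of k y]] unfolding V_def by simp
  have feasP: "(\<forall>i\<in>A. val k i y \<le> 0) \<and> (\<forall>j\<in>J. val k j y = 0)" if "P k y = 0" for k y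
  proof -
    have s1: "(\<Sum>i\<in>A. (max (val k i y) 0)\<^sup>2) \<ge> 0" "(\<Sum>j\<in>J. (val k j y)\<^sup>2) \<ge> 0"
      by (intro sum_nonneg; auto)+
    then have "(\<Sum>i\<in>A. (max (val k i y) 0)\<^sup>2) = 0" "(\<Sum>j\<in>J. (val k j y)\<^sup>2) = 0"
      using that unfolding P_def by linarith+
    then have "\<forall>i\<in>A. (max (val k i y) 0)\<^sup>2 = 0" "\<forall>j\<in>J. (val k j y)\<^sup>2 = 0"
      using finA finJ by (simp_all add: sum_nonneg_eq_0_iff)
    then show ?thesis by auto
  qed
  have d0: "(\<lambda>k. V k yb) \<longlonglongrightarrow> 0"
  proof -
    have mA: "(\<lambda>k. max (val k i yb) 0) \<longlonglongrightarrow> 0" if "i \<in> A" for i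
    proof (rule tendstoI)
      fix e :: real assume "e > 0"
      then have "eventually (\<lambda>k. val k i yb < e) sequentially" using limI that by blast
      then show "eventually (\<lambda>k. dist (max (val k i yb) 0) 0 < e) sequentially"
        by eventually_elim (use \<open>e > 0\<close> in auto)
    qed
    have "(\<lambda>k. P k yb) \<longlonglongrightarrow> (\<Sum>i\<in>A. 0\<^sup>2) + (\<Sum>j\<in>J. 0\<^sup>2)"
      unfolding P_def
      by (intro tendsto_add tendsto_sum tendsto_power) (use mA limJ in auto)
    then have "(\<lambda>k. P k yb) \<longlonglongrightarrow> 0" by simp
    from tendsto_real_sqrt[OF this] show ?thesis unfolding V_def by simp
  qed
  have contval: "continuous_on UNIV (val k i)" if "i \<in> A \<union> J" for k i
    using dv that by (intro continuous_at_imp_continuous_on ballI has_derivative_continuous) blast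
  have contT: "continuous_on UNIV (\<theta> k)" for k
    unfolding \<theta>_def V_def P_def
    by (intro continuous_intros) (auto intro: contval)
  have wex: "\<exists>w. \<forall>y. \<theta> k w \<le> \<theta> k y" for k
  proof -
    define R where "R = sqrt (V k yb) + 1"
    have R0: "R \<ge> 0" unfolding R_def using Vnn[of k yb] by simp
    have "compact (cball yb R)" "cball yb R \<noteq> {}" using R0 by auto
    moreover have "continuous_on (cball yb R) (\<theta> k)" using contT continuous_on_subset by blast
    ultimately obtain w where w: "w \<in> cball yb R" "\<forall>y\<in>cball yb R. \<theta> k w \<le> \<theta> k y"
      using continuous_attains_inf by blast
    have "\<theta> k w \<le> \<theta> k y" for y
    proof (cases "y \<in> cball yb R")
      case True then show ?thesis using w by blast
    next
      case False
      then have "norm (y - yb) > R" by (simp add: dist_norm norm_minus_commute)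
      then have "(norm (y - yb))\<^sup>2 > R\<^sup>2" using R0 by (simp add: power_strict_mono)
      moreover have "R\<^sup>2 \<ge> V k yb"
      proof -
        have "R\<^sup>2 \<ge> (sqrt (V k yb))\<^sup>2" unfolding R_def using Vnn by (intro power_mono) auto
        then show ?thesis using Vnn by simp
      qed
      ultimately have "(y - yb) \<bullet> (y - yb) > V k yb" by (simp add: power2_norm_eq_inner)
      then have "\<theta> k y > \<theta> k yb" unfolding \<theta>_def using Vnn[of k y] by simp
      moreover have "\<theta> k w \<le> \<theta> k yb" using w R0 by auto
      ultimately show ?thesis by simp
    qed
    then show ?thesis by blast
  qed
  then have "\<forall>k. \<exists>w. \<forall>y. \<theta> k w \<le> \<theta> k y" by blast
  from choice[OF this] have "\<exists>w. \<forall>k. \<forall>y. \<theta> k (w k) \<le> \<theta> k y" .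
  then obtain w where wmin: "\<And>k y. \<theta> k (w k) \<le> \<theta> k y" by blast
  have wbd: "norm (w k - yb) \<le> sqrt (V k yb)" for k
  proof -
    have "\<theta> k (w k) \<le> V k yb" using wmin[of k yb] by (simp add: \<theta>_def)
    then have "(w k - yb) \<bullet> (w k - yb) \<le> V k yb" using Vnn[of k "w k"] by (simp add: \<theta>_def)
    then show ?thesis by (simp add: norm_eq_sqrt_inner)
  qed
  have wconv: "w \<longlonglongrightarrow> yb"
  proof -
    have "(\<lambda>k. sqrt (V k yb)) \<longlonglongrightarrow> 0" using tendsto_real_sqrt[OF d0] by simp
    then have "(\<lambda>k. w k - yb) \<longlonglongrightarrow> 0"
      by (rule Lim_null_comparison[rotated]) (use wbd in auto)
    then show ?thesis by (simp add: LIM_zero_iff)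
  qed
  have Vpos_ev: "eventually (\<lambda>k. P k (w k) > 0) sequentially"
  proof -
    have "eventually (\<lambda>k. dist (w k) yb < \<epsilon>) sequentially" using tendstoD[OF wconv eps] .
    then show ?thesis
    proof eventually_elim
      case (elim k)
      show ?case
      proof (rule ccontr)
        assume "\<not> P k (w k) > 0"
        then have "P k (w k) = 0" using Pnn[of k "w k"] by linarith
        then have "\<epsilon> \<le> dist (w k) yb" using feasP nofeas by blast
        then show False using elim by simp
      qed
    qed
  qed

  define lam where "lam k i = max (val k i (w k)) 0 / V k (w k)" for k i
  define mu where "mu k j = val k j (w k) / V k (w k)" for k j
  have lam_bd: "0 \<le> lam k i \<and> lam k i \<le> 1" if "i \<in> A" for k i
  proof (cases "V k (w k) = 0")
    case True then show ?thesis by (simp add: lam_def)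
  next
    case False
    then have "V k (w k) > 0" using Vnn[of k "w k"] by simp
    then show ?thesis using maxleV[OF that, of k "w k"] by (simp add: lam_def divide_le_eq_1)
  qed
  have mu_bd: "\<bar>mu k j\<bar> \<le> 1" if "j \<in> J" for k j
  proof (cases "V k (w k) = 0")
    case True then show ?thesis by (simp add: mu_def)
  next
    case False
    then have "V k (w k) > 0" using Vnn[of k "w k"] by simp
    then show ?thesis using absleV[OF that, of k "w k"] by (simp add: mu_def abs_divide divide_le_eq_1)
  qed
  have VV: "V k y * V k y = P k y" for k y unfolding V_def using Pnn[of k y] by simp
  have grad: "(\<Sum>i\<in>A. lam k i *\<^sub>R G k i (w k)) + (\<Sum>j\<in>J. mu k j *\<^sub>R G k j (w k)) = - (2 *\<^sub>R (w k - yb))"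
    if Pp: "P k (w k) > 0" for k
  proof -
    have dv': "\<forall>i\<in>A \<union> J. (val k i has_derivative (\<lambda>v. G k i (w k) \<bullet> v)) (at (w k))" using dv by blast
    have Pd: "P k = (\<lambda>y. (\<Sum>i\<in>A. (max (val k i y) 0)\<^sup>2) + (\<Sum>j\<in>J. (val k j y)\<^sup>2))"
      by (rule ext) (simp add: P_def)
    have mn: "\<forall>y. sqrt (P k (w k)) + (w k - yb) \<bullet> (w k - yb) \<le> sqrt (P k y) + (y - yb) \<bullet> (y - yb)"
      using wmin[of k] by (simp add: \<theta>_def V_def)
    from grad_V[OF finA finJ dv' Pd Pp mn] show ?thesis by (simp add: lam_def mu_def V_def)
  qed
  have E2raw: "(\<Sum>i\<in>A. lam k i * lam k i) + (\<Sum>j\<in>J. mu k j * mu k j) = 1" if Pp: "P k (w k) > 0" for k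
  proof -
    have "(\<Sum>i\<in>A. lam k i * lam k i) = (\<Sum>i\<in>A. (max (val k i (w k)) 0)\<^sup>2) / P k (w k)"
      unfolding lam_def sum_divide_distrib by (intro sum.cong) (simp_all add: VV[symmetric] power2_eq_square)
    moreover have "(\<Sum>j\<in>J. mu k j * mu k j) = (\<Sum>j\<in>J. (val k j (w k))\<^sup>2) / P k (w k)"
      unfolding mu_def sum_divide_distrib by (intro sum.cong) (simp_all add: VV[symmetric] power2_eq_square)
    ultimately have "(\<Sum>i\<in>A. lam k i * lam k i) + (\<Sum>j\<in>J. mu k j * mu k j) =
        ((\<Sum>i\<in>A. (max (val k i (w k)) 0)\<^sup>2) + (\<Sum>j\<in>J. (val k j (w k))\<^sup>2)) / P k (w k)"
      by (simp only: add_divide_distrib)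
    also have "(\<Sum>i\<in>A. (max (val k i (w k)) 0)\<^sup>2) + (\<Sum>j\<in>J. (val k j (w k))\<^sup>2) = P k (w k)"
      by (simp only: P_def)
    finally have "(\<Sum>i\<in>A. lam k i * lam k i) + (\<Sum>j\<in>J. mu k j * mu k j) = P k (w k) / P k (w k)" .
    then show ?thesis using Pp by simp
  qed
  define sp where "sp k \<longleftrightarrow> span ((\<lambda>j. G k j (w k)) ` J) \<subseteq> span ((\<lambda>j. G k j (w k)) ` S)" for k
  have sp_ev: "eventually sp sequentially" using spanJS wconv unfolding sp_def by blast
  define nu where "nu k = (SOME \<nu>. (\<Sum>j\<in>J. mu k j *\<^sub>R G k j (w k)) = (\<Sum>j\<in>S. \<nu> j *\<^sub>R G k j (w k)))" for k
  have nu_ok: "(\<Sum>j\<in>J. mu k j *\<^sub>R G k j (w k)) = (\<Sum>j\<in>S. nu k j *\<^sub>R G k j (w k))" if "sp k" for k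
  proof -
    have "(\<Sum>j\<in>J. mu k j *\<^sub>R G k j (w k)) \<in> span ((\<lambda>j. G k j (w k)) ` J)"
      by (intro span_sum span_scale span_base) auto
    then have "(\<Sum>j\<in>J. mu k j *\<^sub>R G k j (w k)) \<in> span ((\<lambda>j. G k j (w k)) ` S)"
      using that unfolding sp_def by blast
    from span_fam[OF finS this] have "\<exists>\<nu>. (\<Sum>j\<in>J. mu k j *\<^sub>R G k j (w k)) = (\<Sum>j\<in>S. \<nu> j *\<^sub>R G k j (w k))" .
    then show ?thesis unfolding nu_def by (rule someI_ex)
  qed
  have E1: "(\<Sum>i\<in>A. lam k i *\<^sub>R G k i (w k)) + (\<Sum>j\<in>S. nu k j *\<^sub>R G k j (w k)) = - (2 *\<^sub>R (w k - yb))"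
    if "P k (w k) > 0" "sp k" for k
    using grad[OF that(1)] nu_ok[OF that(2)] by simp
  have E2: "(\<Sum>i\<in>A. lam k i * lam k i) + (\<Sum>j\<in>S. nu k j * mu k j) = 1"
    if Pp: "P k (w k) > 0" and spk: "sp k" for k
  proof -
    obtain u where u: "\<forall>i\<in>A. val k i u \<le> 0" "\<forall>j\<in>J. val k j u = 0" using feas by blast
    have mu_eq: "mu k j = (G k j (w k) \<bullet> (w k - u)) / V k (w k)" if "j \<in> J" for j
      using aff u that unfolding mu_def by (metis diff_zero)
    have "(\<Sum>j\<in>J. mu k j * mu k j) = ((\<Sum>j\<in>J. mu k j *\<^sub>R G k j (w k)) \<bullet> (w k - u)) / V k (w k)"
      by (simp add: inner_sum_left sum_divide_distrib mu_eq)
    also have "\<dots> = ((\<Sum>j\<in>S. nu k j *\<^sub>R G k j (w k)) \<bullet> (w k - u)) / V k (w k)"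
      using nu_ok[OF spk] by simp
    also have "\<dots> = (\<Sum>j\<in>S. nu k j * mu k j)"
      using SJ by (auto simp: inner_sum_left sum_divide_distrib mu_eq intro!: sum.cong)
    finally show ?thesis using E2raw[OF Pp] by simp
  qed
  define good where "good k \<longleftrightarrow> P k (w k) > 0 \<and> sp k" for k
  have good_ev: "eventually good sequentially" using Vpos_ev sp_ev unfolding good_def by (rule eventually_conj)
  define N where "N k = 1 + (\<Sum>j\<in>S. \<bar>nu k j\<bar>)" for k
  have Nge: "N k \<ge> 1" for k unfolding N_def by (simp add: sum_nonneg)
  define th where "th k = 1 / N k" for k
  define nu' where "nu' k j = th k * nu k j" for k j
  have th_bd: "0 < th k \<and> th k \<le> 1" for k using Nge[of k] by (simp add: th_def)
  have nu'_bd: "\<bar>nu' k j\<bar> \<le> 1" if "j \<in> S" for k j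
  proof -
    have "\<bar>nu k j\<bar> \<le> (\<Sum>j\<in>S. \<bar>nu k j\<bar>)" using finS that by (intro member_le_sum) auto
    then have "\<bar>nu k j\<bar> \<le> N k" by (simp add: N_def)
    then show ?thesis using Nge[of k] by (simp add: nu'_def th_def abs_mult)
  qed
  have R1: "(\<Sum>i\<in>A. (lam k i * th k) *\<^sub>R G k i (w k)) + (\<Sum>j\<in>S. nu' k j *\<^sub>R G k j (w k)) = th k *\<^sub>R (- (2 *\<^sub>R (w k - yb)))"
    if "good k" for k
  proof -
    have "th k *\<^sub>R ((\<Sum>i\<in>A. lam k i *\<^sub>R G k i (w k)) + (\<Sum>j\<in>S. nu k j *\<^sub>R G k j (w k))) = th k *\<^sub>R (- (2 *\<^sub>R (w k - yb)))"
      using E1 that unfolding good_def by simp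
    then show ?thesis by (simp add: scaleR_right_distrib scaleR_sum_right nu'_def mult.commute)
  qed
  have R2: "(\<Sum>i\<in>A. lam k i * lam k i * th k) + (\<Sum>j\<in>S. nu' k j * mu k j) = th k" if "good k" for k
  proof -
    have "th k * ((\<Sum>i\<in>A. lam k i * lam k i) + (\<Sum>j\<in>S. nu k j * mu k j)) = th k"
      using E2 that unfolding good_def by simp
    then show ?thesis by (simp add: distrib_left sum_distrib_left nu'_def mult.commute mult.left_commute)
  qed
  have R3: "th k + (\<Sum>j\<in>S. \<bar>nu' k j\<bar>) = 1" for k
  proof -
    have "th k + (\<Sum>j\<in>S. \<bar>nu' k j\<bar>) = th k * N k"
      using th_bd[of k] by (simp add: nu'_def abs_mult sum_distrib_left[symmetric] N_def distrib_left)
    then show ?thesis using Nge[of k] by (simp add: th_def)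
  qed
  define X where "X k p = (if fst p = 0 then lam k (snd p) else if fst p = 1 then nu' k (snd p)
      else if fst p = 2 then mu k (snd p) else th k)" for k and p :: "nat \<times> nat"
  define I1 where "I1 = ({0} \<times> A) \<union> ({1} \<times> S) \<union> ({2} \<times> S) \<union> {(3::nat, 0::nat)}"
  have finI1: "finite I1" unfolding I1_def using finA finS by auto
  have Xbd: "\<forall>k. \<forall>p\<in>I1. \<bar>X k p\<bar> \<le> 1"
  proof (intro allI ballI)
    fix k p assume "p \<in> I1"
    then consider (a) i where "p = (0, i)" "i \<in> A" | (b) j where "p = (1, j)" "j \<in> S"
      | (c) j where "p = (2, j)" "j \<in> S" | (d) "p = (3, 0)" unfolding I1_def by blast
    then show "\<bar>X k p\<bar> \<le> 1"
    proof cases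
      case a then show ?thesis using lam_bd[of i k] by (simp add: X_def)
    next
      case b then show ?thesis using nu'_bd[of j k] by (simp add: X_def)
    next
      case c then show ?thesis using mu_bd[of j k] SJ by (auto simp: X_def)
    next
      case d then show ?thesis using th_bd[of k] by (simp add: X_def)
    qed
  qed
  obtain r1 L where r1: "strict_mono r1" and L: "\<forall>p\<in>I1. (\<lambda>k. X (r1 k) p) \<longlonglongrightarrow> L p"
    using finite_subseq[OF finI1 Xbd] by blast
  define lh where "lh i = L (0, i)" for i
  define nh where "nh j = L (1, j)" for j
  define sh where "sh j = L (2, j)" for j
  define thh where "thh = L (3, 0)"
  have lamL: "(\<lambda>k. lam (r1 k) i) \<longlonglongrightarrow> lh i" if "i \<in> A" for i
  proof -
    have "(0::nat, i) \<in> I1" using that by (simp add: I1_def)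
    with L have "(\<lambda>k. X (r1 k) (0, i)) \<longlonglongrightarrow> L (0, i)" by blast
    then show ?thesis by (simp add: X_def lh_def)
  qed
  have nuL: "(\<lambda>k. nu' (r1 k) j) \<longlonglongrightarrow> nh j" if "j \<in> S" for j
  proof -
    have "(1::nat, j) \<in> I1" using that by (simp add: I1_def)
    with L have "(\<lambda>k. X (r1 k) (1, j)) \<longlonglongrightarrow> L (1, j)" by blast
    then show ?thesis by (simp add: X_def nh_def)
  qed
  have muL: "(\<lambda>k. mu (r1 k) j) \<longlonglongrightarrow> sh j" if "j \<in> S" for j
  proof -
    have "(2::nat, j) \<in> I1" using that by (simp add: I1_def)
    with L have "(\<lambda>k. X (r1 k) (2, j)) \<longlonglongrightarrow> L (2, j)" by blast
    then show ?thesis by (simp add: X_def sh_def)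
  qed
  have thL: "(\<lambda>k. th (r1 k)) \<longlonglongrightarrow> thh"
  proof -
    have "(3::nat, 0::nat) \<in> I1" by (simp add: I1_def)
    with L have "(\<lambda>k. X (r1 k) (3, 0)) \<longlonglongrightarrow> L (3, 0)" by blast
    then show ?thesis by (simp add: X_def thh_def)
  qed
  have GL: "(\<lambda>k. G (r1 k) i (w (r1 k))) \<longlonglongrightarrow> Gs i" if "i \<in> A \<union> J" for i
  proof -
    have "(\<lambda>k. G k i (w k)) \<longlonglongrightarrow> Gs i" using Gc that wconv by blast
    from LIMSEQ_subseq_LIMSEQ[OF this r1] show ?thesis by (simp add: o_def)
  qed
  have good1: "eventually (\<lambda>k. good (r1 k)) sequentially" using eventually_subseq[OF good_ev r1] .
  have wr1: "(\<lambda>k. w (r1 k)) \<longlonglongrightarrow> yb" using LIMSEQ_subseq_LIMSEQ[OF wconv r1] by (simp add: o_def)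
  have lh_nn: "lh i \<ge> 0" if "i \<in> A" for i
    using lamL[OF that] by (rule tendsto_lowerbound) (use lam_bd that in auto)
  have thh_nn: "thh \<ge> 0"
  proof (rule tendsto_lowerbound[OF thL])
    show "eventually (\<lambda>k. 0 \<le> th (r1 k)) sequentially"
      by (intro always_eventually allI) (use th_bd in \<open>simp add: less_imp_le\<close>)
  qed simp
  have lim1: "(\<Sum>i\<in>A. (lh i * thh) *\<^sub>R Gs i) + (\<Sum>j\<in>S. nh j *\<^sub>R Gs j) = 0"
  proof -
    have a: "(\<lambda>k. (\<Sum>i\<in>A. (lam (r1 k) i * th (r1 k)) *\<^sub>R G (r1 k) i (w (r1 k))) + (\<Sum>j\<in>S. nu' (r1 k) j *\<^sub>R G (r1 k) j (w (r1 k))))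
        \<longlonglongrightarrow> (\<Sum>i\<in>A. (lh i * thh) *\<^sub>R Gs i) + (\<Sum>j\<in>S. nh j *\<^sub>R Gs j)"
    proof (rule tendsto_add)
      show "(\<lambda>k. \<Sum>i\<in>A. (lam (r1 k) i * th (r1 k)) *\<^sub>R G (r1 k) i (w (r1 k))) \<longlonglongrightarrow> (\<Sum>i\<in>A. (lh i * thh) *\<^sub>R Gs i)"
      proof (rule tendsto_sum)
        fix i assume i: "i \<in> A"
        have "i \<in> A \<union> J" using i by blast
        from tendsto_scaleR[OF tendsto_mult[OF lamL[OF i] thL] GL[OF this]]
        show "(\<lambda>k. (lam (r1 k) i * th (r1 k)) *\<^sub>R G (r1 k) i (w (r1 k))) \<longlonglongrightarrow> (lh i * thh) *\<^sub>R Gs i" .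
      qed
      show "(\<lambda>k. \<Sum>j\<in>S. nu' (r1 k) j *\<^sub>R G (r1 k) j (w (r1 k))) \<longlonglongrightarrow> (\<Sum>j\<in>S. nh j *\<^sub>R Gs j)"
      proof (rule tendsto_sum)
        fix j assume j: "j \<in> S"
        have "j \<in> A \<union> J" using j SJ by blast
        from tendsto_scaleR[OF nuL[OF j] GL[OF this]]
        show "(\<lambda>k. nu' (r1 k) j *\<^sub>R G (r1 k) j (w (r1 k))) \<longlonglongrightarrow> nh j *\<^sub>R Gs j" .
      qed
    qed
    have b: "(\<lambda>k. th (r1 k) *\<^sub>R (- (2 *\<^sub>R (w (r1 k) - yb)))) \<longlonglongrightarrow> thh *\<^sub>R (- (2 *\<^sub>R (yb - yb)))"
      by (intro tendsto_intros thL wr1)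
    have "(\<lambda>k. (\<Sum>i\<in>A. (lam (r1 k) i * th (r1 k)) *\<^sub>R G (r1 k) i (w (r1 k))) + (\<Sum>j\<in>S. nu' (r1 k) j *\<^sub>R G (r1 k) j (w (r1 k))))
        \<longlonglongrightarrow> thh *\<^sub>R (- (2 *\<^sub>R (yb - yb)))"
      by (rule Lim_transform_eventually[OF b eventually_mono[OF good1]]) (rule R1[symmetric])
    from LIMSEQ_unique[OF a this] show ?thesis by simp
  qed
  have lim2: "(\<Sum>i\<in>A. lh i * lh i * thh) + (\<Sum>j\<in>S. nh j * sh j) = thh"
  proof -
    have a: "(\<lambda>k. (\<Sum>i\<in>A. lam (r1 k) i * lam (r1 k) i * th (r1 k)) + (\<Sum>j\<in>S. nu' (r1 k) j * mu (r1 k) j))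
        \<longlonglongrightarrow> (\<Sum>i\<in>A. lh i * lh i * thh) + (\<Sum>j\<in>S. nh j * sh j)"
    proof (rule tendsto_add)
      show "(\<lambda>k. \<Sum>i\<in>A. lam (r1 k) i * lam (r1 k) i * th (r1 k)) \<longlonglongrightarrow> (\<Sum>i\<in>A. lh i * lh i * thh)"
      proof (rule tendsto_sum)
        fix i assume i: "i \<in> A"
        from tendsto_mult[OF tendsto_mult[OF lamL[OF i] lamL[OF i]] thL]
        show "(\<lambda>k. lam (r1 k) i * lam (r1 k) i * th (r1 k)) \<longlonglongrightarrow> lh i * lh i * thh" .
      qed
      show "(\<lambda>k. \<Sum>j\<in>S. nu' (r1 k) j * mu (r1 k) j) \<longlonglongrightarrow> (\<Sum>j\<in>S. nh j * sh j)"
      proof (rule tendsto_sum)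
        fix j assume j: "j \<in> S"
        from tendsto_mult[OF nuL[OF j] muL[OF j]]
        show "(\<lambda>k. nu' (r1 k) j * mu (r1 k) j) \<longlonglongrightarrow> nh j * sh j" .
      qed
    qed
    have "(\<lambda>k. (\<Sum>i\<in>A. lam (r1 k) i * lam (r1 k) i * th (r1 k)) + (\<Sum>j\<in>S. nu' (r1 k) j * mu (r1 k) j)) \<longlonglongrightarrow> thh"
      by (rule Lim_transform_eventually[OF thL eventually_mono[OF good1]]) (rule R2[symmetric])
    from LIMSEQ_unique[OF a this] show ?thesis .
  qed
  have lim3: "thh + (\<Sum>j\<in>S. \<bar>nh j\<bar>) = 1"
  proof -
    have "(\<lambda>k. th (r1 k) + (\<Sum>j\<in>S. \<bar>nu' (r1 k) j\<bar>)) \<longlonglongrightarrow> thh + (\<Sum>j\<in>S. \<bar>nh j\<bar>)"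
    proof (rule tendsto_add[OF thL])
      show "(\<lambda>k. \<Sum>j\<in>S. \<bar>nu' (r1 k) j\<bar>) \<longlonglongrightarrow> (\<Sum>j\<in>S. \<bar>nh j\<bar>)"
      proof (rule tendsto_sum)
        fix j assume j: "j \<in> S"
        from tendsto_rabs[OF nuL[OF j]] show "(\<lambda>k. \<bar>nu' (r1 k) j\<bar>) \<longlonglongrightarrow> \<bar>nh j\<bar>" .
      qed
    qed
    moreover have "(\<lambda>k. th (r1 k) + (\<Sum>j\<in>S. \<bar>nu' (r1 k) j\<bar>)) = (\<lambda>k. 1)" using R3 by simp
    ultimately have "(\<lambda>k. 1::real) \<longlonglongrightarrow> thh + (\<Sum>j\<in>S. \<bar>nh j\<bar>)" by simp
    from LIMSEQ_unique[OF this tendsto_const] show ?thesis by simp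
  qed
  have thh_pos: "thh > 0"
  proof (rule ccontr)
    assume "\<not> thh > 0"
    then have t0: "thh = 0" using thh_nn by simp
    then have "(\<Sum>j\<in>S. nh j *\<^sub>R Gs j) = 0" using lim1 by simp
    moreover have "\<exists>j\<in>S. nh j \<noteq> 0"
    proof (rule ccontr)
      assume "\<not> (\<exists>j\<in>S. nh j \<noteq> 0)"
      then have "(\<Sum>j\<in>S. \<bar>nh j\<bar>) = 0" by simp
      then show False using lim3 t0 by simp
    qed
    ultimately have "fam_lin_dep S Gs" unfolding fam_lin_dep_def by blast
    then show False using indep by simp
  qed
  define c0 where "c0 i = (if i \<in> A then lh i * thh else nh i)" for i
  define ll where "ll i = (if i \<in> A then lh i else sh i)" for i
  have sumAS: "(\<Sum>i\<in>A \<union> S. f i) = (\<Sum>i\<in>A. f i) + (\<Sum>i\<in>S. f i)" for f :: "nat \<Rightarrow> 'c::comm_monoid_add"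
    using finA finS disjS by (simp add: sum.union_disjoint)
  have sumS_if: "(\<Sum>i\<in>S. f (if i \<in> A then a i else b i)) = (\<Sum>i\<in>S. f (b i))" for f :: "real \<Rightarrow> 'c::comm_monoid_add" and a b
    using disjS by (intro sum.cong) auto
  have c0a: "\<forall>i\<in>A. c0 i \<ge> 0 \<and> (c0 i \<noteq> 0 \<longrightarrow> lh i > 0)"
  proof
    fix i assume i: "i \<in> A"
    have "lh i \<ge> 0" using lh_nn i by blast
    then show "c0 i \<ge> 0 \<and> (c0 i \<noteq> 0 \<longrightarrow> lh i > 0)" using i thh_pos by (auto simp: c0_def)
  qed
  have c0b: "(\<Sum>i\<in>A \<union> S. c0 i *\<^sub>R Gs i) = 0"
  proof -
    have "(\<Sum>i\<in>A \<union> S. c0 i *\<^sub>R Gs i) = (\<Sum>i\<in>A. (lh i * thh) *\<^sub>R Gs i) + (\<Sum>j\<in>S. nh j *\<^sub>R Gs j)"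
    proof -
      have "(\<Sum>i\<in>A. c0 i *\<^sub>R Gs i) = (\<Sum>i\<in>A. (lh i * thh) *\<^sub>R Gs i)" by (rule sum.cong) (simp_all add: c0_def)
      moreover have "(\<Sum>i\<in>S. c0 i *\<^sub>R Gs i) = (\<Sum>i\<in>S. nh i *\<^sub>R Gs i)"
        using disjS by (intro sum.cong) (auto simp: c0_def)
      ultimately show ?thesis unfolding sumAS by simp
    qed
    then show ?thesis using lim1 by simp
  qed
  have c0c: "(\<Sum>i\<in>A \<union> S. c0 i * ll i) > 0"
  proof -
    have "(\<Sum>i\<in>A \<union> S. c0 i * ll i) = (\<Sum>i\<in>A. lh i * lh i * thh) + (\<Sum>j\<in>S. nh j * sh j)"
    proof -
      have "(\<Sum>i\<in>A. c0 i * ll i) = (\<Sum>i\<in>A. lh i * lh i * thh)" by (rule sum.cong) (simp_all add: c0_def ll_def)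
      moreover have "(\<Sum>i\<in>S. c0 i * ll i) = (\<Sum>i\<in>S. nh i * sh i)"
        using disjS by (intro sum.cong) (auto simp: c0_def ll_def)
      ultimately show ?thesis unfolding sumAS by simp
    qed
    then show ?thesis using lim2 thh_pos by simp
  qed
  obtain c K where KA: "K \<subseteq> A" and Kne: "K \<noteq> {}" and cK: "\<forall>i\<in>K. c i > 0 \<and> lh i > 0"
    and cz: "\<forall>i\<in>A - K. c i = 0" and cs: "(\<Sum>i\<in>A \<union> S. c i *\<^sub>R Gs i) = 0"
    and cl: "(\<Sum>i\<in>A \<union> S. c i * ll i) > 0"
    and ker: "\<And>d. (\<forall>i\<in>A - K. d i = 0) \<Longrightarrow> (\<Sum>i\<in>A \<union> S. d i *\<^sub>R Gs i) = 0 \<Longrightarrow> (\<exists>t. \<forall>i\<in>A \<union> S. d i = t * c i)"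
    using minsupp[OF finA finS disjS indep c0a c0b c0c] by blast
  have finK: "finite K" using finite_subset[OF KA finA] .
  have disjKS: "K \<inter> S = {}" using KA disjS by blast
  have lamK: "eventually (\<lambda>k. lam (r1 k) i > 0) sequentially" if "i \<in> K" for i
    using order_tendstoD(1)[OF lamL] cK KA that by blast
  have KAct: "K \<subseteq> Act"
  proof
    fix i assume iK: "i \<in> K"
    show "i \<in> Act"
    proof (rule ccontr)
      assume "i \<notin> Act"
      then have "i \<in> A - Act" using iK KA by blast
      then have "eventually (\<lambda>k. val k i (w k) < 0) sequentially" using inact wconv by blast
      from eventually_subseq[OF this r1] have ev1: "eventually (\<lambda>k. val (r1 k) i (w (r1 k)) < 0) sequentially" .
      have ev2: "eventually (\<lambda>k. lam (r1 k) i > 0) sequentially" using lamK[OF iK] .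
      have "eventually (\<lambda>k. False) sequentially"
        using ev1 ev2 by eventually_elim (simp add: lam_def max_absorb2 less_imp_le)
      then show False by simp
    qed
  qed
  have sumAK: "(\<Sum>i\<in>A. f i) = (\<Sum>i\<in>K. f i)" if "\<forall>i\<in>A - K. f i = 0" for f :: "nat \<Rightarrow> 'c::comm_monoid_add"
    using finA KA that by (intro sum.mono_neutral_right) auto
  have pld: "pos_lin_dep K S Gs"
    unfolding pos_lin_dep_def
  proof (intro exI conjI)
    show "\<forall>i\<in>K. c i \<ge> 0" using cK by (auto intro: less_imp_le)
    obtain i0 where i0: "i0 \<in> K" using Kne by blast
    then have "c i0 > 0" using cK by blast
    then show "(\<exists>i\<in>K. c i \<noteq> 0) \<or> (\<exists>i\<in>S. c i \<noteq> 0)" using i0 by (intro disjI1 bexI[of _ i0]) auto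
    have "(\<Sum>i\<in>A. c i *\<^sub>R Gs i) = (\<Sum>i\<in>K. c i *\<^sub>R Gs i)" using cz by (intro sumAK) auto
    then show "(\<Sum>i\<in>K. c i *\<^sub>R Gs i) + (\<Sum>i\<in>S. c i *\<^sub>R Gs i) = 0" using cs unfolding sumAS by simp
  qed
  have dep_ev: "eventually (\<lambda>k. fam_lin_dep (K \<union> S) (\<lambda>i. G k i (w k))) sequentially"
    using rc KAct pld wconv by blast

  have finKS: "finite (K \<union> S)" using finK finS by simp
  define prp where "prp k e \<longleftrightarrow> (\<Sum>i\<in>K \<union> S. \<bar>e i\<bar>) = 1 \<and> (\<Sum>i\<in>K \<union> S. e i *\<^sub>R G k i (w k)) = 0
      \<and> (\<Sum>i\<in>K \<union> S. e i * c i) \<ge> 0" for k and e :: "nat \<Rightarrow> real"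
  define e where "e k = (if \<exists>e. prp k e then SOME e. prp k e else (\<lambda>_. 0))" for k
  have e_ok: "prp k (e k)" if "fam_lin_dep (K \<union> S) (\<lambda>i. G k i (w k))" for k
  proof -
    have "\<exists>e. prp k e" unfolding prp_def using norm_dep[OF finKS that, of c] by blast
    then show ?thesis unfolding e_def using someI_ex[of "prp k"] by simp
  qed
  have e_bd: "\<forall>k. \<forall>i\<in>K \<union> S. \<bar>e k i\<bar> \<le> 1"
  proof (intro allI ballI)
    fix k i assume i: "i \<in> K \<union> S"
    show "\<bar>e k i\<bar> \<le> 1"
    proof (cases "\<exists>e. prp k e")
      case True
      then have pk: "prp k (e k)" unfolding e_def using someI_ex[of "prp k"] by simp
      have "\<bar>e k i\<bar> \<le> (\<Sum>i\<in>K \<union> S. \<bar>e k i\<bar>)" using finKS i by (intro member_le_sum) auto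
      then show ?thesis using pk by (simp add: prp_def)
    next
      case False then show ?thesis by (simp add: e_def)
    qed
  qed
  have prop_ev: "eventually (\<lambda>k. prp k (e k)) sequentially"
    using dep_ev by (rule eventually_mono) (rule e_ok)
  have "\<forall>k. \<forall>i\<in>K \<union> S. \<bar>e (r1 k) i\<bar> \<le> 1" using e_bd by blast
  from finite_subseq[OF finKS this] obtain r2 eh where r2: "strict_mono r2"
    and eh: "\<forall>i\<in>K \<union> S. (\<lambda>k. e (r1 (r2 k)) i) \<longlonglongrightarrow> eh i" by blast
  define r where "r = r1 \<circ> r2"
  have r: "strict_mono r" unfolding r_def using r1 r2 by (rule strict_mono_o)
  have prop_r: "eventually (\<lambda>k. prp (r k) (e (r k))) sequentially" using eventually_subseq[OF prop_ev r] .
  have good_r: "eventually (\<lambda>k. good (r k)) sequentially" using eventually_subseq[OF good_ev r] .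
  have eL: "(\<lambda>k. e (r k) i) \<longlonglongrightarrow> eh i" if "i \<in> K \<union> S" for i
    using eh that by (simp add: r_def)
  have lamLr: "(\<lambda>k. lam (r k) i) \<longlonglongrightarrow> lh i" if "i \<in> A" for i
    using LIMSEQ_subseq_LIMSEQ[OF lamL[OF that] r2] by (simp add: r_def o_def)
  have muLr: "(\<lambda>k. mu (r k) j) \<longlonglongrightarrow> sh j" if "j \<in> S" for j
    using LIMSEQ_subseq_LIMSEQ[OF muL[OF that] r2] by (simp add: r_def o_def)
  have GLr: "(\<lambda>k. G (r k) i (w (r k))) \<longlonglongrightarrow> Gs i" if "i \<in> A \<union> J" for i
  proof -
    have "(\<lambda>k. G k i (w k)) \<longlonglongrightarrow> Gs i" using Gc that wconv by blast
    from LIMSEQ_subseq_LIMSEQ[OF this r] show ?thesis by (simp add: o_def)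
  qed
  have KSA: "K \<union> S \<subseteq> A \<union> J" using KA SJ by blast
  have Labs: "(\<Sum>i\<in>K \<union> S. \<bar>eh i\<bar>) = 1"
  proof -
    have a: "(\<lambda>k. \<Sum>i\<in>K \<union> S. \<bar>e (r k) i\<bar>) \<longlonglongrightarrow> (\<Sum>i\<in>K \<union> S. \<bar>eh i\<bar>)"
      by (rule tendsto_sum, rule tendsto_rabs, rule eL)
    have "(\<lambda>k. \<Sum>i\<in>K \<union> S. \<bar>e (r k) i\<bar>) \<longlonglongrightarrow> 1"
      by (rule Lim_transform_eventually[OF tendsto_const eventually_mono[OF prop_r]]) (simp add: prp_def)
    from LIMSEQ_unique[OF a this] show ?thesis .
  qed
  have Ldep: "(\<Sum>i\<in>K \<union> S. eh i *\<^sub>R Gs i) = 0"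
  proof -
    have a: "(\<lambda>k. \<Sum>i\<in>K \<union> S. e (r k) i *\<^sub>R G (r k) i (w (r k))) \<longlonglongrightarrow> (\<Sum>i\<in>K \<union> S. eh i *\<^sub>R Gs i)"
    proof (rule tendsto_sum)
      fix i assume i: "i \<in> K \<union> S"
      then have "i \<in> A \<union> J" using KSA by blast
      from tendsto_scaleR[OF eL[OF i] GLr[OF this]]
      show "(\<lambda>k. e (r k) i *\<^sub>R G (r k) i (w (r k))) \<longlonglongrightarrow> eh i *\<^sub>R Gs i" .
    qed
    have "(\<lambda>k. \<Sum>i\<in>K \<union> S. e (r k) i *\<^sub>R G (r k) i (w (r k))) \<longlonglongrightarrow> 0"
      by (rule Lim_transform_eventually[OF tendsto_const eventually_mono[OF prop_r]]) (simp add: prp_def)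
    from LIMSEQ_unique[OF a this] show ?thesis .
  qed
  have Lc: "(\<Sum>i\<in>K \<union> S. eh i * c i) \<ge> 0"
  proof (rule tendsto_lowerbound)
    show "(\<lambda>k. \<Sum>i\<in>K \<union> S. e (r k) i * c i) \<longlonglongrightarrow> (\<Sum>i\<in>K \<union> S. eh i * c i)"
      by (rule tendsto_sum, rule tendsto_mult, rule eL) auto
    show "eventually (\<lambda>k. 0 \<le> (\<Sum>i\<in>K \<union> S. e (r k) i * c i)) sequentially"
      by (rule eventually_mono[OF prop_r]) (simp add: prp_def)
  qed simp
  define d where "d i = (if i \<in> K \<union> S then eh i else 0)" for i
  have dz: "\<forall>i\<in>A - K. d i = 0" using disjS by (auto simp: d_def)
  have ds: "(\<Sum>i\<in>A \<union> S. d i *\<^sub>R Gs i) = 0"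
  proof -
    have "(\<Sum>i\<in>A \<union> S. d i *\<^sub>R Gs i) = (\<Sum>i\<in>K \<union> S. d i *\<^sub>R Gs i)"
      using finA finS KA by (intro sum.mono_neutral_right) (auto simp: d_def)
    also have "\<dots> = (\<Sum>i\<in>K \<union> S. eh i *\<^sub>R Gs i)" by (rule sum.cong) (simp_all add: d_def)
    finally show ?thesis using Ldep by simp
  qed
  obtain t where t: "\<forall>i\<in>A \<union> S. d i = t * c i" using ker[OF dz ds] by blast
  have eht: "eh i = t * c i" if "i \<in> K \<union> S" for i
  proof -
    have "i \<in> A \<union> S" using that KA by blast
    then have "d i = t * c i" using t by blast
    then show ?thesis using that by (simp add: d_def)
  qed
  obtain i0 where i0: "i0 \<in> K" using Kne by blast
  have cc: "(\<Sum>i\<in>K \<union> S. c i * c i) > 0"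
  proof -
    have "c i0 * c i0 \<le> (\<Sum>i\<in>K \<union> S. c i * c i)" using finKS i0 by (intro member_le_sum) auto
    moreover have "c i0 * c i0 > 0" using cK i0 by simp
    ultimately show ?thesis by simp
  qed
  have tpos: "t > 0"
  proof -
    have "(\<Sum>i\<in>K \<union> S. eh i * c i) = t * (\<Sum>i\<in>K \<union> S. c i * c i)"
      by (simp add: eht sum_distrib_left mult.assoc)
    then have t0: "t \<ge> 0" using Lc cc by (metis mult_less_0_iff not_le order_less_le_trans)
    have "t \<noteq> 0"
    proof
      assume "t = 0"
      then have "(\<Sum>i\<in>K \<union> S. \<bar>eh i\<bar>) = 0" by (simp add: eht)
      then show False using Labs by simp
    qed
    then show ?thesis using t0 by simp
  qed
  have ehK: "eh i > 0" if "i \<in> K" for i using eht[of i] that tpos cK by simp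
  have epos_ev: "eventually (\<lambda>k. \<forall>i\<in>K. e (r k) i > 0) sequentially"
  proof (rule eventually_ball_finite[OF finK], rule ballI)
    fix i assume i: "i \<in> K"
    show "eventually (\<lambda>k. e (r k) i > 0) sequentially" using order_tendstoD(1)[OF eL ehK[OF i]] i by blast
  qed
  have lampos_ev: "eventually (\<lambda>k. \<forall>i\<in>K. lam (r k) i > 0) sequentially"
  proof (rule eventually_ball_finite[OF finK], rule ballI)
    fix i assume i: "i \<in> K"
    show "eventually (\<lambda>k. lam (r k) i > 0) sequentially"
      using eventually_subseq[OF lamK[OF i] r2] by (simp add: r_def)
  qed
  define vl where "vl = (\<Sum>i\<in>K. eh i * lh i) + (\<Sum>j\<in>S. eh j * sh j)"
  have vl_pos: "vl > 0"
  proof -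
    have "(\<Sum>i\<in>A \<union> S. c i * ll i) = (\<Sum>i\<in>K. c i * lh i) + (\<Sum>j\<in>S. c j * sh j)"
    proof -
      have "(\<Sum>i\<in>A. c i * ll i) = (\<Sum>i\<in>K. c i * ll i)" using cz by (intro sumAK) auto
      also have "\<dots> = (\<Sum>i\<in>K. c i * lh i)" using KA by (intro sum.cong) (auto simp: ll_def)
      finally have 1: "(\<Sum>i\<in>A. c i * ll i) = (\<Sum>i\<in>K. c i * lh i)" .
      have 2: "(\<Sum>j\<in>S. c j * ll j) = (\<Sum>j\<in>S. c j * sh j)" using disjS by (intro sum.cong) (auto simp: ll_def)
      show ?thesis unfolding sumAS 1 2 ..
    qed
    moreover have "vl = t * ((\<Sum>i\<in>K. c i * lh i) + (\<Sum>j\<in>S. c j * sh j))"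
      unfolding vl_def by (simp add: eht distrib_left sum_distrib_left mult.assoc)
    ultimately show ?thesis using cl tpos by simp
  qed
  have vconv: "(\<lambda>k. (\<Sum>i\<in>K. e (r k) i * lam (r k) i) + (\<Sum>j\<in>S. e (r k) j * mu (r k) j)) \<longlonglongrightarrow> vl"
    unfolding vl_def
  proof (rule tendsto_add)
    show "(\<lambda>k. \<Sum>i\<in>K. e (r k) i * lam (r k) i) \<longlonglongrightarrow> (\<Sum>i\<in>K. eh i * lh i)"
    proof (rule tendsto_sum)
      fix i assume i: "i \<in> K"
      then have "i \<in> K \<union> S" "i \<in> A" using KA by auto
      from tendsto_mult[OF eL[OF this(1)] lamLr[OF this(2)]]
      show "(\<lambda>k. e (r k) i * lam (r k) i) \<longlonglongrightarrow> eh i * lh i" .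
    qed
    show "(\<lambda>k. \<Sum>j\<in>S. e (r k) j * mu (r k) j) \<longlonglongrightarrow> (\<Sum>j\<in>S. eh j * sh j)"
    proof (rule tendsto_sum)
      fix j assume j: "j \<in> S"
      then have "j \<in> K \<union> S" by auto
      from tendsto_mult[OF eL[OF this] muLr[OF j]]
      show "(\<lambda>k. e (r k) j * mu (r k) j) \<longlonglongrightarrow> eh j * sh j" .
    qed
  qed
  have vpos_ev: "eventually (\<lambda>k. (\<Sum>i\<in>K. e (r k) i * lam (r k) i) + (\<Sum>j\<in>S. e (r k) j * mu (r k) j) > 0) sequentially"
    using order_tendstoD(1)[OF vconv vl_pos] .
  have "eventually (\<lambda>k. False) sequentially"
    using prop_r good_r epos_ev lampos_ev vpos_ev
  proof eventually_elim
    case (elim k)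
    define q where "q = r k"
    have pq: "prp q (e q)" and gq: "good q" and ep: "\<forall>i\<in>K. e q i > 0" and lp: "\<forall>i\<in>K. lam q i > 0"
      and vp: "(\<Sum>i\<in>K. e q i * lam q i) + (\<Sum>j\<in>S. e q j * mu q j) > 0"
      using elim by (simp_all add: q_def)
    have Vq: "V q (w q) > 0" using gq unfolding good_def V_def by simp
    have valK: "val q i (w q) = V q (w q) * lam q i" if "i \<in> K" for i
    proof -
      have "max (val q i (w q)) 0 > 0" using lp that Vq by (auto simp: lam_def zero_less_divide_iff)
      then have "max (val q i (w q)) 0 = val q i (w q)" by (simp add: max_def split: if_splits)
      then show ?thesis using Vq by (simp add: lam_def)
    qed
    have valS: "val q j (w q) = V q (w q) * mu q j" for j using Vq by (simp add: mu_def)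
    have "(\<Sum>i\<in>K. e q i * val q i (w q)) + (\<Sum>j\<in>S. e q j * val q j (w q))
        = V q (w q) * ((\<Sum>i\<in>K. e q i * lam q i) + (\<Sum>j\<in>S. e q j * mu q j))"
    proof -
      have s1: "(\<Sum>i\<in>K. e q i * val q i (w q)) = V q (w q) * (\<Sum>i\<in>K. e q i * lam q i)"
        unfolding sum_distrib_left by (rule sum.cong) (simp_all add: valK)
      have s2: "(\<Sum>j\<in>S. e q j * val q j (w q)) = V q (w q) * (\<Sum>j\<in>S. e q j * mu q j)"
        unfolding sum_distrib_left by (rule sum.cong) (simp_all add: valS)
      show ?thesis unfolding s1 s2 by (simp add: distrib_left)
    qed
    then have Phi_pos: "(\<Sum>i\<in>K. e q i * val q i (w q)) + (\<Sum>j\<in>S. e q j * val q j (w q)) > 0"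
      using Vq vp by simp
    obtain u where u: "\<forall>i\<in>A. val q i u \<le> 0" "\<forall>j\<in>J. val q j u = 0" using feas by blast
    have "(\<Sum>i\<in>K. e q i * val q i (w q)) + (\<Sum>j\<in>S. e q j * val q j (w q)) \<le> 0"
    proof (rule dep_convex[OF finK finS disjKS])
      show "\<forall>i\<in>K. convex_on UNIV (val q i)" using cv KA by blast
      show "\<forall>i\<in>K. (val q i has_derivative (\<lambda>v. G q i (w q) \<bullet> v)) (at (w q))" using dv KA by blast
      show "\<forall>j\<in>S. val q j (w q) - val q j u = G q j (w q) \<bullet> (w q - u)" using aff SJ by blast
      show "\<forall>i\<in>K. 0 \<le> e q i" using ep by (auto intro: less_imp_le)
      show "(\<Sum>i\<in>K \<union> S. e q i *\<^sub>R G q i (w q)) = 0" using pq by (simp add: prp_def)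
      show "\<forall>i\<in>K. val q i u \<le> 0" using u KA by blast
      show "\<forall>j\<in>S. val q j u = 0" using u SJ by blast
    qed
    then show False using Phi_pos by simp
  qed
  then show False by simp
qed

lemma cont_diff_obtain:
  assumes "cont_diff g"
  obtains g' where "\<And>z. (g has_derivative blinfun_apply (g' z)) (at z)" "continuous_on UNIV g'"
  using assms unfolding cont_diff_def by blast

lemma grad_y_eq:
  fixes g :: "(real^'n) \<times> (real^'m) \<Rightarrow> real"
  assumes "\<And>z. (g has_derivative blinfun_apply (g' z)) (at z)"
  shows "grad_y g x y = (\<chi> j. blinfun_apply (g' (x, y)) (0, axis j 1))"
proof -
  have "frechet_derivative g (at (x, y)) = blinfun_apply (g' (x, y))"
    using frechet_derivative_at[OF assms[of "(x, y)"]] by simp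
  then show ?thesis unfolding grad_y_def by simp
qed

lemma partial_deriv:
  fixes g :: "(real^'n) \<times> (real^'m) \<Rightarrow> real"
  assumes "cont_diff g"
  shows "((\<lambda>y. g (x, y)) has_derivative (\<lambda>v. grad_y g x y \<bullet> v)) (at y)"
proof -
  obtain g' where g': "\<And>z. (g has_derivative blinfun_apply (g' z)) (at z)" "continuous_on UNIV g'"
    using assms unfolding cont_diff_def by blast
  have "((\<lambda>y. (x, y)) has_derivative (\<lambda>v. (0, v))) (at y)"
    by (rule has_derivative_Pair[OF has_derivative_const has_derivative_ident])
  from has_derivative_compose[OF this g'(1)]
  have d: "((\<lambda>y. g (x, y)) has_derivative (\<lambda>v. blinfun_apply (g' (x, y)) (0, v))) (at y)" .
  have eq: "blinfun_apply (g' (x, y)) (0, v) = grad_y g x y \<bullet> v" for v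
  proof -
    have v: "(0::real^'n, v) = (\<Sum>j\<in>UNIV. (v $ j) *\<^sub>R (0::real^'n, axis j (1::real)))"
    proof -
      have "(\<Sum>j\<in>UNIV. (v $ j) *\<^sub>R axis j (1::real)) = v"
        using basis_expansion[of v] by (simp add: scalar_mult_eq_scaleR)
      then show ?thesis by (simp add: prod_eq_iff fst_sum snd_sum)
    qed
    have "blinfun_apply (g' (x, y)) (0, v) = (\<Sum>j\<in>UNIV. (v $ j) * blinfun_apply (g' (x, y)) (0, axis j 1))"
    proof -
      have sc: "blinfun_apply B (0::real^'n, c *\<^sub>R a) = c * blinfun_apply B (0, a)" for B :: "((real^'n) \<times> (real^'m)) \<Rightarrow>\<^sub>L real" and c a
      proof -
        have "(0::real^'n, c *\<^sub>R a) = c *\<^sub>R (0, a)" by simp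
        then have "blinfun_apply B (0::real^'n, c *\<^sub>R a) = c *\<^sub>R blinfun_apply B (0, a)"
          by (simp only: blinfun.scaleR_right)
        then show ?thesis by simp
      qed
      show ?thesis by (subst v) (simp add: blinfun.sum_right sc)
    qed
    also have "\<dots> = grad_y g x y \<bullet> v"
      unfolding grad_y_eq[OF g'(1)] inner_vec_def by (simp add: mult.commute)
    finally show ?thesis .
  qed
  show ?thesis using d unfolding eq .
qed

lemma cont_diff_cont:
  assumes "cont_diff g"
  shows "continuous_on UNIV g"
proof -
  obtain g' where g': "\<And>z. (g has_derivative blinfun_apply (g' z)) (at z)"
    using assms unfolding cont_diff_def by blast
  show ?thesis
    by (intro continuous_at_imp_continuous_on ballI has_derivative_continuous[OF g'])
qed

lemma cont_diff_seq:
  assumes "cont_diff g" "zs \<longlonglongrightarrow> z"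
  shows "(\<lambda>k. g (zs k)) \<longlonglongrightarrow> g z"
proof -
  obtain g' where g': "\<And>z. (g has_derivative blinfun_apply (g' z)) (at z)"
    using assms(1) unfolding cont_diff_def by blast
  have "isCont g z" using has_derivative_continuous[OF g'] .
  from isCont_tendsto_compose[OF this assms(2)] show ?thesis .
qed

lemma grad_seq:
  fixes g :: "(real^'n) \<times> (real^'m) \<Rightarrow> real"
  assumes "cont_diff g" "xs \<longlonglongrightarrow> xb" "ys \<longlonglongrightarrow> yb"
  shows "(\<lambda>k. grad_y g (xs k) (ys k)) \<longlonglongrightarrow> grad_y g xb yb"
proof -
  obtain g' where g': "\<And>z. (g has_derivative blinfun_apply (g' z)) (at z)" "continuous_on UNIV g'"
    using assms(1) unfolding cont_diff_def by blast
  have z: "(\<lambda>k. (xs k, ys k)) \<longlonglongrightarrow> (xb, yb)" using assms(2,3) by (rule tendsto_Pair)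
  have "(\<lambda>k. g' (xs k, ys k)) \<longlonglongrightarrow> g' (xb, yb)"
  proof -
    have "isCont g' (xb, yb)" using g'(2) continuous_on_eq_continuous_at[OF open_UNIV] by blast
    from isCont_tendsto_compose[OF this z] show ?thesis .
  qed
  then have "(\<lambda>k. \<chi> j. blinfun_apply (g' (xs k, ys k)) (0, axis j 1)) \<longlonglongrightarrow> (\<chi> j. blinfun_apply (g' (xb, yb)) (0, axis j 1))"
    by (intro tendsto_vec_lambda blinfun.tendsto tendsto_const)
  then show ?thesis unfolding grad_y_eq[OF g'(1)] .
qed

lemma affine_grad:
  fixes g :: "(real^'n) \<times> (real^'m) \<Rightarrow> real"
  assumes "cont_diff g" "\<forall>y. g (x, y) = a \<bullet> y + b"
  shows "g (x, y) - g (x, z) = grad_y g x y \<bullet> (y - z)"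
proof -
  have d1: "((\<lambda>y. g (x, y)) has_derivative (\<lambda>v. grad_y g x y \<bullet> v)) (at y)" by (rule partial_deriv[OF assms(1)])
  have "((\<lambda>y. a \<bullet> y + b) has_derivative (\<lambda>v. a \<bullet> v + 0)) (at y)"
    by (rule has_derivative_add[OF has_derivative_inner_right[OF has_derivative_ident] has_derivative_const])
  then have "((\<lambda>y. a \<bullet> y + b) has_derivative (\<lambda>v. a \<bullet> v)) (at y)" by simp
  then have d2: "((\<lambda>y. g (x, y)) has_derivative (\<lambda>v. a \<bullet> v)) (at y)" using assms(2) by simp
  have "(\<lambda>v. grad_y g x y \<bullet> v) = (\<lambda>v. a \<bullet> v)" using has_derivative_unique[OF d1 d2] .
  then have "grad_y g x y \<bullet> (y - z) = a \<bullet> (y - z)" by metis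
  then show ?thesis using assms(2) by (simp add: inner_diff_right)
qed

locale bil =
  fixes F f :: "(real^'n) \<times> (real^'m) \<Rightarrow> real"
    and h :: "nat \<Rightarrow> (real^'n) \<times> (real^'m) \<Rightarrow> real"
    and l p :: nat
    and X :: "(real^'n) set"
  assumes lp: "l \<le> p"
    and cF: "cont_diff F" and cf: "cont_diff f" and ch: "\<forall>i\<in>{1..p}. cont_diff (h i)"
    and clX: "closed X"
    and cvf: "\<forall>x. convex_on UNIV (\<lambda>y. f (x, y))"
    and cvh: "\<forall>x. \<forall>i\<in>{1..l}. convex_on UNIV (\<lambda>y. h i (x, y))"
    and afh: "\<forall>x. \<forall>i\<in>{l+1..p}. \<exists>a b. \<forall>y. h i (x, y) = a \<bullet> y + b"
    and Xdom: "X \<subseteq> domG h l p"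
    and lb: "\<forall>x\<in>X. locally_bounded_at (Gam h l p) x"
    and rcp: "\<forall>x y. x \<in> X \<and> y \<in> Sol f h l p x \<longrightarrow> RCPLD_S f h l p (domG h l p) x y"
    and Xne: "X \<noteq> {}" and cX: "compact X"
begin

definition phr where "phr x = real_of_ereal (phi f h l p x)"

lemma chI: "i \<in> {1..l} \<Longrightarrow> cont_diff (h i)" using ch lp by auto
lemma chJ: "i \<in> {l+1..p} \<Longrightarrow> cont_diff (h i)" using ch by auto

lemma Gam_iff: "y \<in> Gam h l p x \<longleftrightarrow> (\<forall>i\<in>{1..l}. h i (x, y) \<le> 0) \<and> (\<forall>i\<in>{l+1..p}. h i (x, y) = 0)"
  by (simp add: Gam_def)

lemma Gam_limit:
  assumes "\<forall>k. ys k \<in> Gam h l p (xs k)" "xs \<longlonglongrightarrow> x" "ys \<longlonglongrightarrow> y"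
  shows "y \<in> Gam h l p x"
  unfolding Gam_iff
proof (intro conjI ballI)
  have z: "(\<lambda>k. (xs k, ys k)) \<longlonglongrightarrow> (x, y)" using assms(2,3) by (rule tendsto_Pair)
  fix i assume i: "i \<in> {1..l}"
  have "(\<lambda>k. h i (xs k, ys k)) \<longlonglongrightarrow> h i (x, y)" by (rule cont_diff_seq[OF chI[OF i] z])
  moreover have "\<forall>k. h i (xs k, ys k) \<le> 0" using assms(1) i by (simp add: Gam_iff)
  ultimately show "h i (x, y) \<le> 0" by (intro tendsto_upperbound) (auto intro: always_eventually)
next
  have z: "(\<lambda>k. (xs k, ys k)) \<longlonglongrightarrow> (x, y)" using assms(2,3) by (rule tendsto_Pair)
  fix i assume i: "i \<in> {l+1..p}"
  have "(\<lambda>k. h i (xs k, ys k)) \<longlonglongrightarrow> h i (x, y)" by (rule cont_diff_seq[OF chJ[OF i] z])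
  moreover have "(\<lambda>k. h i (xs k, ys k)) = (\<lambda>k. 0)" using assms(1) i by (simp add: Gam_iff)
  ultimately show "h i (x, y) = 0" using LIMSEQ_unique tendsto_const by metis
qed

lemma Gam_closed: "closed (Gam h l p x)"
  unfolding closed_sequential_limits
proof (intro allI impI)
  fix ys y assume a: "(\<forall>n. ys n \<in> Gam h l p x) \<and> ys \<longlonglongrightarrow> y"
  show "y \<in> Gam h l p x" by (rule Gam_limit[of ys "\<lambda>_. x"]) (use a in auto)
qed

lemma Gam_bounded: "x \<in> X \<Longrightarrow> bounded (Gam h l p x)"
  using lb unfolding locally_bounded_at_def by (meson bounded_subset)

lemma Gam_ne: "x \<in> X \<Longrightarrow> Gam h l p x \<noteq> {}"
  using Xdom by (auto simp: domG_def)

lemma contf_y: "continuous_on S (\<lambda>y. f (x, y))"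
proof -
  have "\<And>y. isCont (\<lambda>y. f (x, y)) y"
    using has_derivative_continuous[OF partial_deriv[OF cf]] by blast
  then show ?thesis by (simp add: continuous_at_imp_continuous_on)
qed

lemma min_ex:
  assumes "x \<in> X"
  shows "\<exists>y0\<in>Gam h l p x. \<forall>y\<in>Gam h l p x. f (x, y0) \<le> f (x, y)"
proof -
  have "compact (Gam h l p x)" using Gam_closed Gam_bounded[OF assms] by (simp add: compact_eq_bounded_closed)
  then show ?thesis using continuous_attains_inf[OF _ Gam_ne[OF assms] contf_y] by blast
qed

lemma phi_eq:
  assumes "x \<in> X"
  shows "phi f h l p x = ereal (phr x)" and "\<And>y. y \<in> Gam h l p x \<Longrightarrow> phr x \<le> f (x, y)"
    and "\<exists>y\<in>Gam h l p x. f (x, y) = phr x"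
proof -
  obtain y0 where y0: "y0 \<in> Gam h l p x" "\<forall>y\<in>Gam h l p x. f (x, y0) \<le> f (x, y)"
    using min_ex[OF assms] by blast
  have "phi f h l p x = ereal (f (x, y0))"
    unfolding phi_def
  proof (rule Inf_eqI)
    show "\<And>i. i \<in> (\<lambda>y. ereal (f (x, y))) ` Gam h l p x \<Longrightarrow> ereal (f (x, y0)) \<le> i" using y0 by auto
    show "\<And>z. (\<And>i. i \<in> (\<lambda>y. ereal (f (x, y))) ` Gam h l p x \<Longrightarrow> z \<le> i) \<Longrightarrow> z \<le> ereal (f (x, y0))"
      using y0 by auto
  qed
  then have pr: "phr x = f (x, y0)" by (simp add: phr_def)
  show "phi f h l p x = ereal (phr x)" using pr \<open>phi f h l p x = ereal (f (x, y0))\<close> by simp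
  show "\<And>y. y \<in> Gam h l p x \<Longrightarrow> phr x \<le> f (x, y)" using y0 pr by simp
  show "\<exists>y\<in>Gam h l p x. f (x, y) = phr x" using y0 pr by auto
qed

lemma Sol_iff:
  assumes "x \<in> X"
  shows "y \<in> Sol f h l p x \<longleftrightarrow> y \<in> Gam h l p x \<and> f (x, y) \<le> phr x"
  using phi_eq[OF assms] unfolding Sol_def by (auto intro: antisym)

lemma Sol_ne: "x \<in> X \<Longrightarrow> Sol f h l p x \<noteq> {}"
  using phi_eq Sol_iff by fastforce

end

lemma fam_indep_set:
  fixes v :: "nat \<Rightarrow> 'b::real_vector"
  assumes fin: "finite S" and ind: "\<not> fam_lin_dep S v"
  shows "inj_on v S" "independent (v ` S)"
proof -
  show inj: "inj_on v S"
  proof (rule inj_onI, rule ccontr)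
    fix i j assume ij: "i \<in> S" "j \<in> S" "v i = v j" "i \<noteq> j"
    define c where "c k = (if k = i then 1 else if k = j then -1 else (0::real))" for k
    have z: "\<forall>k\<in>S - {i, j}. c k *\<^sub>R v k = 0" by (simp add: c_def)
    have "(\<Sum>k\<in>S. c k *\<^sub>R v k) = (\<Sum>k\<in>{i, j}. c k *\<^sub>R v k)"
      using fin ij z by (intro sum.mono_neutral_right) auto
    also have "\<dots> = c i *\<^sub>R v i + c j *\<^sub>R v j" using ij(4) by simp
    also have "\<dots> = 0" using ij by (simp add: c_def)
    finally have "(\<Sum>k\<in>S. c k *\<^sub>R v k) = 0" .
    moreover have "c i \<noteq> 0" by (simp add: c_def)
    ultimately have "fam_lin_dep S v" unfolding fam_lin_dep_def using ij(1) by (intro exI[of _ c]) blast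
    then show False using ind by simp
  qed
  have fin': "finite (v ` S)" using fin by simp
  show "independent (v ` S)"
  proof (rule ccontr)
    assume a: "\<not> independent (v ` S)"
    have "dependent (v ` S)" using a by (rule notnotD)
    then have "\<exists>u. (\<exists>x\<in>v ` S. u x \<noteq> 0) \<and> (\<Sum>x\<in>v ` S. u x *\<^sub>R x) = 0"
      unfolding dependent_finite[OF fin'] .
    then obtain u where u1: "\<exists>x\<in>v ` S. u x \<noteq> 0" and u2: "(\<Sum>x\<in>v ` S. u x *\<^sub>R x) = 0" by blast
    have "(\<Sum>x\<in>v ` S. u x *\<^sub>R x) = (\<Sum>i\<in>S. u (v i) *\<^sub>R v i)"
      using sum.reindex[OF inj, of "\<lambda>x. u x *\<^sub>R x"] by (simp add: o_def)
    then have s0: "(\<Sum>i\<in>S. u (v i) *\<^sub>R v i) = 0" using u2 by simp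
    obtain x where x: "x \<in> v ` S" "u x \<noteq> 0" using u1 by blast
    then obtain i where i: "i \<in> S" "x = v i" by blast
    have "\<exists>i\<in>S. u (v i) \<noteq> 0" using x i by blast
    then have "fam_lin_dep S v" unfolding fam_lin_dep_def using s0 by (intro exI[of _ "\<lambda>i. u (v i)"]) blast
    then show False using ind by simp
  qed
qed

lemma indep_open:
  fixes v :: "nat \<Rightarrow> nat \<Rightarrow> 'b::real_normed_vector"
  assumes fin: "finite S" and ind: "\<not> fam_lin_dep S vs" and conv: "\<forall>i\<in>S. (\<lambda>k. v k i) \<longlonglongrightarrow> vs i"
  shows "eventually (\<lambda>k. \<not> fam_lin_dep S (v k)) sequentially"
proof (rule ccontr)
  assume "\<not> ?thesis"
  then have "frequently (\<lambda>k. fam_lin_dep S (v k)) sequentially" by (simp add: not_eventually)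
  from freq_subseq[OF this] obtain r :: "nat \<Rightarrow> nat" where r: "strict_mono r" "\<forall>n. fam_lin_dep S (v (r n))" by blast
  have "\<forall>n. \<exists>e. (\<Sum>i\<in>S. \<bar>e i\<bar>) = 1 \<and> (\<Sum>i\<in>S. e i *\<^sub>R v (r n) i) = 0"
    using norm_dep[OF fin r(2)[rule_format], where c="\<lambda>_. 0"] by blast
  from choice[OF this] obtain e where e: "\<forall>n. (\<Sum>i\<in>S. \<bar>e n i\<bar>) = 1 \<and> (\<Sum>i\<in>S. e n i *\<^sub>R v (r n) i) = 0"
    by blast
  have bd: "\<forall>n. \<forall>i\<in>S. \<bar>e n i\<bar> \<le> 1"
  proof (intro allI ballI)
    fix n i assume "i \<in> S"
    then have "\<bar>e n i\<bar> \<le> (\<Sum>i\<in>S. \<bar>e n i\<bar>)" using fin by (intro member_le_sum) auto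
    then show "\<bar>e n i\<bar> \<le> 1" using e by simp
  qed
  obtain r2 eh where r2: "strict_mono r2" and eh: "\<forall>i\<in>S. (\<lambda>n. e (r2 n) i) \<longlonglongrightarrow> eh i"
    using finite_subseq[OF fin bd] by blast
  have vl: "(\<lambda>n. v (r (r2 n)) i) \<longlonglongrightarrow> vs i" if "i \<in> S" for i
  proof -
    have "strict_mono (r \<circ> r2)" using r(1) r2 by (rule strict_mono_o)
    from LIMSEQ_subseq_LIMSEQ[OF conv[rule_format, OF that] this] show ?thesis by (simp add: o_def)
  qed
  have a1: "(\<lambda>n. \<Sum>i\<in>S. \<bar>e (r2 n) i\<bar>) \<longlonglongrightarrow> (\<Sum>i\<in>S. \<bar>eh i\<bar>)"
    by (rule tendsto_sum, rule tendsto_rabs) (use eh in blast)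
  moreover have "(\<lambda>n. \<Sum>i\<in>S. \<bar>e (r2 n) i\<bar>) = (\<lambda>n. 1)" using e by simp
  ultimately have "(\<lambda>n. 1::real) \<longlonglongrightarrow> (\<Sum>i\<in>S. \<bar>eh i\<bar>)" by simp
  then have s1: "(\<Sum>i\<in>S. \<bar>eh i\<bar>) = 1" using LIMSEQ_unique[OF _ tendsto_const] by blast
  have a2: "(\<lambda>n. \<Sum>i\<in>S. e (r2 n) i *\<^sub>R v (r (r2 n)) i) \<longlonglongrightarrow> (\<Sum>i\<in>S. eh i *\<^sub>R vs i)"
    by (rule tendsto_sum, rule tendsto_scaleR) (use eh vl in blast)+
  moreover have "(\<lambda>n. \<Sum>i\<in>S. e (r2 n) i *\<^sub>R v (r (r2 n)) i) = (\<lambda>n. 0)" using e by simp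
  ultimately have "(\<lambda>n. 0) \<longlonglongrightarrow> (\<Sum>i\<in>S. eh i *\<^sub>R vs i)" by simp
  then have s2: "(\<Sum>i\<in>S. eh i *\<^sub>R vs i) = 0" using LIMSEQ_unique[OF _ tendsto_const] by blast
  have "\<exists>i\<in>S. eh i \<noteq> 0"
  proof (rule ccontr)
    assume "\<not> (\<exists>i\<in>S. eh i \<noteq> 0)"
    then have "(\<Sum>i\<in>S. \<bar>eh i\<bar>) = 0" by simp
    then show False using s1 by simp
  qed
  then have "fam_lin_dep S vs" unfolding fam_lin_dep_def using s2 by (intro exI[of _ eh]) blast
  then show False using ind by simp
qed

lemma span_incl:
  fixes v vs :: "nat \<Rightarrow> 'b::euclidean_space"
  assumes finJ: "finite J" and SJ: "S \<subseteq> J" and iv: "\<not> fam_lin_dep S v" and ivs: "\<not> fam_lin_dep S vs"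
    and dimeq: "dim (v ` J) = dim (vs ` J)" and speq: "span (vs ` S) = span (vs ` J)"
  shows "span (v ` J) \<subseteq> span (v ` S)"
proof -
  have finS: "finite S" using finite_subset[OF SJ finJ] .
  have d1: "dim (v ` S) = card S"
  proof -
    have "dim (span (v ` S)) = card (v ` S)" using fam_indep_set(2)[OF finS iv] by (rule dim_span_eq_card_independent)
    then show ?thesis using card_image[OF fam_indep_set(1)[OF finS iv]] by simp
  qed
  have d2: "dim (vs ` S) = card S"
  proof -
    have "dim (span (vs ` S)) = card (vs ` S)" using fam_indep_set(2)[OF finS ivs] by (rule dim_span_eq_card_independent)
    then show ?thesis using card_image[OF fam_indep_set(1)[OF finS ivs]] by simp
  qed
  have "dim (vs ` J) = dim (vs ` S)"
  proof -
    have "dim (vs ` J) = dim (span (vs ` J))" by simp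
    also have "\<dots> = dim (span (vs ` S))" using speq by simp
    finally show ?thesis by simp
  qed
  then have dJ: "dim (v ` J) = dim (v ` S)" using dimeq d1 d2 by simp
  have sub: "span (v ` S) \<subseteq> span (v ` J)" using SJ by (intro span_mono) auto
  have "span (v ` S) = span (v ` J)"
    by (rule subspace_dim_equal) (use sub dJ in auto)
  then show ?thesis by simp
qed

context bil
begin

lemma phr_lsc:
  assumes xs: "\<forall>k. xs k \<in> X" "xs \<longlonglongrightarrow> xb" and xb: "xb \<in> X" and e: "e > 0"
  shows "eventually (\<lambda>k. phr (xs k) > phr xb - e) sequentially"
proof (rule ccontr)
  assume "\<not> ?thesis"
  then have "frequently (\<lambda>k. phr (xs k) \<le> phr xb - e) sequentially" by (simp add: not_eventually not_less)
  from freq_subseq[OF this] obtain r :: "nat \<Rightarrow> nat" where r: "strict_mono r" "\<forall>n. phr (xs (r n)) \<le> phr xb - e" by blast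
  have "locally_bounded_at (Gam h l p) xb" using lb xb by (rule bspec)
  then obtain B V where BV: "bounded B" "open V" "xb \<in> V" "\<forall>x\<in>V. Gam h l p x \<subseteq> B"
    unfolding locally_bounded_at_def by (elim exE conjE) (rule that)
  have "\<forall>k. \<exists>u. u \<in> Gam h l p (xs k) \<and> f (xs k, u) = phr (xs k)" using phi_eq(3) xs(1) by blast
  from choice[OF this] obtain u where u: "\<forall>k. u k \<in> Gam h l p (xs k) \<and> f (xs k, u k) = phr (xs k)" by blast
  have xr: "(\<lambda>n. xs (r n)) \<longlonglongrightarrow> xb" using LIMSEQ_subseq_LIMSEQ[OF xs(2) r(1)] by (simp add: o_def)
  have "eventually (\<lambda>n. xs (r n) \<in> V) sequentially" using topological_tendstoD[OF xr BV(2) BV(3)] .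
  then obtain N where N: "\<forall>n\<ge>N. xs (r n) \<in> V" unfolding eventually_sequentially by blast
  define u' where "u' n = u (r (n + N))" for n
  have uB: "u' n \<in> B" for n
  proof -
    have "xs (r (n + N)) \<in> V" using N by simp
    moreover have "u (r (n + N)) \<in> Gam h l p (xs (r (n + N)))" using u by blast
    ultimately show "u' n \<in> B" using BV(4) unfolding u'_def by blast
  qed
  have "range u' \<subseteq> B" using uB by blast
  then have "bounded (range u')" by (rule bounded_subset[OF BV(1)])
  from bounded_imp_convergent_subsequence[OF this] obtain yl r' where r': "strict_mono r'" "(u' \<circ> r') \<longlonglongrightarrow> yl"
    by blast
  define s where "s n = r (r' n + N)" for n
  have sm: "strict_mono (\<lambda>n. r' n + N)" using r'(1) by (simp add: strict_mono_def)
  have s: "strict_mono s" unfolding s_def using strict_mono_o[OF r(1) sm] by (simp add: o_def)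
  have xs_s: "(\<lambda>n. xs (s n)) \<longlonglongrightarrow> xb" using LIMSEQ_subseq_LIMSEQ[OF xs(2) s] by (simp add: o_def)
  have us: "(\<lambda>n. u (s n)) \<longlonglongrightarrow> yl" using r'(2) by (simp add: o_def u'_def s_def)
  have uG: "\<forall>n. u (s n) \<in> Gam h l p (xs (s n))" using u by blast
  have "yl \<in> Gam h l p xb" by (rule Gam_limit[OF uG xs_s us])
  then have le1: "phr xb \<le> f (xb, yl)" using phi_eq(2)[OF xb] by blast
  have lim: "(\<lambda>n. f (xs (s n), u (s n))) \<longlonglongrightarrow> f (xb, yl)" by (rule cont_diff_seq[OF cf tendsto_Pair[OF xs_s us]])
  have "\<forall>n. f (xs (s n), u (s n)) \<le> phr xb - e" using u r(2) by (simp add: s_def)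
  then have "f (xb, yl) \<le> phr xb - e"
    using tendsto_upperbound[OF lim always_eventually trivial_limit_sequentially] by blast
  then show False using le1 e by simp
qed

end

lemma dist_pair_le: "dist (a, b) (c, d) \<le> dist a c + dist b d"
proof -
  have "(dist a c)\<^sup>2 + (dist b d)\<^sup>2 \<le> (dist a c + dist b d)\<^sup>2"
    by (simp add: power2_eq_square algebra_simps)
  then have "sqrt ((dist a c)\<^sup>2 + (dist b d)\<^sup>2) \<le> sqrt ((dist a c + dist b d)\<^sup>2)" by (rule real_sqrt_le_mono)
  then show ?thesis by (simp add: dist_Pair_Pair)
qed

context bil
begin

lemma f_yb: "xb \<in> X \<Longrightarrow> yb \<in> Sol f h l p xb \<Longrightarrow> f (xb, yb) = phr xb \<and> yb \<in> Gam h l p xb"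
  using Sol_iff phi_eq(2) by (meson antisym)

lemma isc_false:
  assumes xs: "\<forall>k. xs k \<in> X" "xs \<longlonglongrightarrow> xb" and xb: "xb \<in> X" and yb: "yb \<in> Sol f h l p xb"
    and eps: "\<epsilon> > 0" and nof: "\<forall>k. \<forall>y\<in>Sol f h l p (xs k). \<epsilon> \<le> dist y yb"
  shows False
proof -
  have "RCPLD_S f h l p (domG h l p) xb yb" using rcp xb yb by blast
  then obtain U SS where RC1: "open U" and RC2: "(xb, yb) \<in> U" and RC3: "SS \<subseteq> {l+1..p}"
    and RC4: "\<not> fam_lin_dep SS (\<lambda>i. gy f h i xb yb)"
    and RC5: "span ((\<lambda>i. gy f h i xb yb) ` SS) = span ((\<lambda>i. gy f h i xb yb) ` {l+1..p})"
    and RC6: "\<forall>x y. (x, y) \<in> U \<and> x \<in> domG h l p \<longrightarrow>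
          dim ((\<lambda>i. gy f h i x y) ` {l+1..p}) = dim ((\<lambda>i. gy f h i xb yb) ` {l+1..p})"
    and RC7: "\<forall>K. K \<subseteq> {0} \<union> {i\<in>{1..l}. h i (xb, yb) = 0} \<longrightarrow>
          pos_lin_dep K SS (\<lambda>i. gy f h i xb yb) \<longrightarrow>
          (\<forall>x y. (x, y) \<in> U \<and> x \<in> domG h l p \<longrightarrow> fam_lin_dep (K \<union> SS) (\<lambda>i. gy f h i x y))"
    unfolding RCPLD_S_def by (elim exE conjE) (rule that)
  have fyb: "f (xb, yb) = phr xb" and ybG: "yb \<in> Gam h l p xb" using f_yb[OF xb yb] by auto
  define val where "val k i y = (if i = 0 then f (xs k, y) - phr (xs k) else h i (xs k, y))" for k i y
  define G where "G k i y = gy f h i (xs k) y" for k i y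
  define Gs where "Gs i = gy f h i xb yb" for i
  define Act where "Act = {0} \<union> {i\<in>{1..l}. h i (xb, yb) = 0}"
  have val0: "val k 0 = (\<lambda>y. f (xs k, y) - phr (xs k))" for k by (simp add: val_def fun_eq_iff)
  have valn: "i \<noteq> 0 \<Longrightarrow> val k i = (\<lambda>y. h i (xs k, y))" for k i by (simp add: val_def fun_eq_iff)
  have finA: "finite {0..l}" and finJ: "finite {l+1..p}" by auto
  have disj: "{0..l} \<inter> {l+1..p} = {}" by auto
  have ActA: "Act \<subseteq> {0..l}" by (auto simp: Act_def)
  have hcont: "cont_diff (h i)" if "i \<in> {0..l} \<union> {l+1..p}" "i \<noteq> 0" for i
    using that ch lp by auto
  have dv: "\<forall>k. \<forall>i\<in>{0..l} \<union> {l+1..p}. \<forall>y. (val k i has_derivative (\<lambda>v. G k i y \<bullet> v)) (at y)"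
  proof (intro allI ballI)
    fix k i y assume i: "i \<in> {0..l} \<union> {l+1..p}"
    show "(val k i has_derivative (\<lambda>v. G k i y \<bullet> v)) (at y)"
    proof (cases "i = 0")
      case True
      have "((\<lambda>y. f (xs k, y) - phr (xs k)) has_derivative (\<lambda>v. grad_y f (xs k) y \<bullet> v - 0)) (at y)"
        by (rule has_derivative_diff[OF partial_deriv[OF cf] has_derivative_const])
      then show ?thesis using True by (simp add: val0 G_def gy_def)
    next
      case False
      from partial_deriv[OF hcont[OF i False]]
      have "((\<lambda>y. h i (xs k, y)) has_derivative (\<lambda>v. grad_y (h i) (xs k) y \<bullet> v)) (at y)" .
      then show ?thesis using False by (simp add: valn G_def gy_def)
    qed
  qed
  have cv: "\<forall>k. \<forall>i\<in>{0..l}. convex_on UNIV (val k i)"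
  proof (intro allI ballI)
    fix k i assume i: "i \<in> {0..l}"
    show "convex_on UNIV (val k i)"
    proof (cases "i = 0")
      case True
      have "convex_on UNIV (\<lambda>y. f (xs k, y) - phr (xs k))"
        by (rule convex_on_diff[OF cvf[rule_format]]) (simp add: concave_on_const)
      then show ?thesis using True by (simp add: val0)
    next
      case False
      then have "i \<in> {1..l}" using i by auto
      then show ?thesis using cvh False by (simp add: valn)
    qed
  qed
  have aff: "\<forall>k. \<forall>j\<in>{l+1..p}. \<forall>y z. val k j y - val k j z = G k j y \<bullet> (y - z)"
  proof (intro allI ballI)
    fix k j y z assume j: "j \<in> {l+1..p}"
    then have j0: "j \<noteq> 0" by auto
    obtain a b where ab: "\<forall>y. h j (xs k, y) = a \<bullet> y + b" using afh j by blast
    have "h j (xs k, y) - h j (xs k, z) = grad_y (h j) (xs k) y \<bullet> (y - z)"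
      by (rule affine_grad[OF hcont ab]) (use j j0 in auto)
    then show "val k j y - val k j z = G k j y \<bullet> (y - z)" using j0 by (simp add: valn G_def gy_def)
  qed
  have feas: "\<forall>k. \<exists>u. (\<forall>i\<in>{0..l}. val k i u \<le> 0) \<and> (\<forall>j\<in>{l+1..p}. val k j u = 0)"
  proof
    fix k
    obtain u where u: "u \<in> Sol f h l p (xs k)" using Sol_ne[of "xs k"] xs(1) by blast
    then have uG: "u \<in> Gam h l p (xs k)" and uf: "f (xs k, u) \<le> phr (xs k)" using Sol_iff[of "xs k" u] xs(1) by auto
    have "\<forall>i\<in>{0..l}. val k i u \<le> 0"
    proof
      fix i assume i: "i \<in> {0..l}"
      show "val k i u \<le> 0"
      proof (cases "i = 0")
        case True then show ?thesis using uf by (simp add: val0)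
      next
        case False then have "i \<in> {1..l}" using i by auto
        then show ?thesis using uG False by (simp add: valn Gam_iff)
      qed
    qed
    moreover have "\<forall>j\<in>{l+1..p}. val k j u = 0"
    proof
      fix j assume j: "j \<in> {l+1..p}"
      then have "j \<noteq> 0" by auto
      then show "val k j u = 0" using uG j by (simp add: valn Gam_iff)
    qed
    ultimately show "\<exists>u. (\<forall>i\<in>{0..l}. val k i u \<le> 0) \<and> (\<forall>j\<in>{l+1..p}. val k j u = 0)" by blast
  qed
  have xyb: "(\<lambda>k. (xs k, yb)) \<longlonglongrightarrow> (xb, yb)" using tendsto_Pair[OF xs(2) tendsto_const] .
  have limI: "\<forall>i\<in>{0..l}. \<forall>e>0. eventually (\<lambda>k. val k i yb < e) sequentially"
  proof (intro ballI allI impI)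
    fix i :: nat and e :: real assume i: "i \<in> {0..l}" and e: "e > 0"
    show "eventually (\<lambda>k. val k i yb < e) sequentially"
    proof (cases "i = 0")
      case True
      have e2: "e / 2 > 0" using e by simp
      have ev1: "eventually (\<lambda>k. phr (xs k) > phr xb - e / 2) sequentially" by (rule phr_lsc[OF xs xb e2])
      have "(\<lambda>k. f (xs k, yb)) \<longlonglongrightarrow> f (xb, yb)" by (rule cont_diff_seq[OF cf xyb])
      then have ev2: "eventually (\<lambda>k. f (xs k, yb) < phr xb + e / 2) sequentially"
        using fyb e2 by (intro order_tendstoD(2)) auto
      show ?thesis using ev1 ev2 by eventually_elim (simp add: True val0)
    next
      case False
      then have i1: "i \<in> {1..l}" using i by auto
      have "(\<lambda>k. h i (xs k, yb)) \<longlonglongrightarrow> h i (xb, yb)" by (rule cont_diff_seq[OF chI[OF i1] xyb])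
      moreover have "h i (xb, yb) < e"
      proof -
        have "h i (xb, yb) \<le> 0" using ybG i1 unfolding Gam_iff by blast
        then show ?thesis using e by simp
      qed
      ultimately have "eventually (\<lambda>k. h i (xs k, yb) < e) sequentially" by (rule order_tendstoD(2))
      then show ?thesis using False by (simp add: valn)
    qed
  qed
  have limJ: "\<forall>j\<in>{l+1..p}. (\<lambda>k. val k j yb) \<longlonglongrightarrow> 0"
  proof
    fix j assume j: "j \<in> {l+1..p}"
    then have j0: "j \<noteq> 0" by auto
    have "(\<lambda>k. h j (xs k, yb)) \<longlonglongrightarrow> h j (xb, yb)" by (rule cont_diff_seq[OF chJ[OF j] xyb])
    moreover have "h j (xb, yb) = 0" using ybG j by (auto simp: Gam_iff)
    ultimately show "(\<lambda>k. val k j yb) \<longlonglongrightarrow> 0" using j0 by (simp add: valn)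
  qed
  have Gc: "\<forall>i\<in>{0..l} \<union> {l+1..p}. \<forall>ys. ys \<longlonglongrightarrow> yb \<longrightarrow> (\<lambda>k. G k i (ys k)) \<longlonglongrightarrow> Gs i"
  proof (intro ballI allI impI)
    fix i ys assume i: "i \<in> {0..l} \<union> {l+1..p}" and ys: "ys \<longlonglongrightarrow> yb"
    show "(\<lambda>k. G k i (ys k)) \<longlonglongrightarrow> Gs i"
    proof (cases "i = 0")
      case True
      then show ?thesis using grad_seq[OF cf xs(2) ys] by (simp add: G_def Gs_def gy_def)
    next
      case False
      then show ?thesis using grad_seq[OF hcont[OF i False] xs(2) ys] by (simp add: G_def Gs_def gy_def)
    qed
  qed
  have inact: "\<forall>i\<in>{0..l} - Act. \<forall>ys. ys \<longlonglongrightarrow> yb \<longrightarrow> eventually (\<lambda>k. val k i (ys k) < 0) sequentially"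
  proof (intro ballI allI impI)
    fix i ys assume i: "i \<in> {0..l} - Act" and ys: "ys \<longlonglongrightarrow> yb"
    then have i1: "i \<in> {1..l}" and i0: "i \<noteq> 0" and hne: "h i (xb, yb) \<noteq> 0" by (auto simp: Act_def)
    have "h i (xb, yb) \<le> 0" using ybG i1 by (auto simp: Gam_iff)
    then have hlt: "h i (xb, yb) < 0" using hne by simp
    have "(\<lambda>k. h i (xs k, ys k)) \<longlonglongrightarrow> h i (xb, yb)" by (rule cont_diff_seq[OF chI[OF i1] tendsto_Pair[OF xs(2) ys]])
    then have "eventually (\<lambda>k. h i (xs k, ys k) < 0) sequentially" using hlt by (rule order_tendstoD(2))
    then show "eventually (\<lambda>k. val k i (ys k) < 0) sequentially" using i0 by (simp add: valn)
  qed
  have indep: "\<not> fam_lin_dep SS Gs" using RC4 by (simp add: Gs_def[abs_def])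
  have SJ: "SS \<subseteq> {l+1..p}" by (rule RC3)
  have finS: "finite SS" using finite_subset[OF SJ finJ] .
  have evU: "eventually (\<lambda>k. (xs k, ys k) \<in> U) sequentially" if "ys \<longlonglongrightarrow> yb" for ys
    using topological_tendstoD[OF tendsto_Pair[OF xs(2) that] RC1 RC2] .
  have dom: "xs k \<in> domG h l p" for k using xs(1) Xdom by blast
  have spanJS: "\<forall>ys. ys \<longlonglongrightarrow> yb \<longrightarrow> eventually (\<lambda>k. span ((\<lambda>j. G k j (ys k)) ` {l+1..p}) \<subseteq> span ((\<lambda>j. G k j (ys k)) ` SS)) sequentially"
  proof (intro allI impI)
    fix ys assume ys: "ys \<longlonglongrightarrow> yb"
    have conv: "\<forall>i\<in>SS. (\<lambda>k. G k i (ys k)) \<longlonglongrightarrow> Gs i" using Gc ys SJ by blast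
    have ev1: "eventually (\<lambda>k. \<not> fam_lin_dep SS (\<lambda>i. G k i (ys k))) sequentially"
      by (rule indep_open[OF finS indep conv])
    show "eventually (\<lambda>k. span ((\<lambda>j. G k j (ys k)) ` {l+1..p}) \<subseteq> span ((\<lambda>j. G k j (ys k)) ` SS)) sequentially"
      using ev1 evU[OF ys]
    proof eventually_elim
      case (elim k)
      have dimeq: "dim ((\<lambda>j. G k j (ys k)) ` {l+1..p}) = dim ((\<lambda>j. Gs j) ` {l+1..p})"
        using RC6 elim(2) dom[of k] by (simp add: G_def Gs_def)
      have speq: "span ((\<lambda>j. Gs j) ` SS) = span ((\<lambda>j. Gs j) ` {l+1..p})" using RC5 by (simp add: Gs_def)
      show ?case by (rule span_incl[OF finJ SJ elim(1) _ dimeq speq]) (use indep in simp)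
    qed
  qed
  have rc: "\<forall>K. K \<subseteq> Act \<longrightarrow> pos_lin_dep K SS Gs \<longrightarrow>
      (\<forall>ys. ys \<longlonglongrightarrow> yb \<longrightarrow> eventually (\<lambda>k. fam_lin_dep (K \<union> SS) (\<lambda>i. G k i (ys k))) sequentially)"
  proof (intro allI impI)
    fix K ys assume K: "K \<subseteq> Act" and pld: "pos_lin_dep K SS Gs" and ys: "ys \<longlonglongrightarrow> yb"
    have K': "K \<subseteq> {0} \<union> {i\<in>{1..l}. h i (xb, yb) = 0}" using K by (simp add: Act_def)
    have pld': "pos_lin_dep K SS (\<lambda>i. gy f h i xb yb)" using pld by (simp add: Gs_def[abs_def])
    have R: "\<forall>x y. (x, y) \<in> U \<and> x \<in> domG h l p \<longrightarrow> fam_lin_dep (K \<union> SS) (\<lambda>i. gy f h i x y)"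
      using RC7 K' pld' by blast
    show "eventually (\<lambda>k. fam_lin_dep (K \<union> SS) (\<lambda>i. G k i (ys k))) sequentially"
      using evU[OF ys] by (rule eventually_mono) (use R dom in \<open>simp add: G_def\<close>)
  qed
  have nofeas: "\<forall>k y. (\<forall>i\<in>{0..l}. val k i y \<le> 0) \<and> (\<forall>j\<in>{l+1..p}. val k j y = 0) \<longrightarrow> \<epsilon> \<le> dist y yb"
  proof (intro allI impI)
    fix k y assume a: "(\<forall>i\<in>{0..l}. val k i y \<le> 0) \<and> (\<forall>j\<in>{l+1..p}. val k j y = 0)"
    have "val k 0 y \<le> 0" using a by simp
    then have "f (xs k, y) \<le> phr (xs k)" by (simp add: val0)
    moreover have "y \<in> Gam h l p (xs k)"
      unfolding Gam_iff
    proof (intro conjI ballI)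
      fix i assume i: "i \<in> {1..l}"
      then have i0: "i \<in> {0..l}" "i \<noteq> 0" by auto
      then have "val k i y \<le> 0" using a by blast
      then show "h i (xs k, y) \<le> 0" using i0 by (simp add: valn)
    next
      fix j assume j: "j \<in> {l+1..p}"
      then have "j \<noteq> 0" by auto
      then show "h j (xs k, y) = 0" using a j by (auto simp: valn)
    qed
    ultimately have "y \<in> Sol f h l p (xs k)" using Sol_iff xs(1) by blast
    then show "\<epsilon> \<le> dist y yb" using nof by blast
  qed
  show False
    by (rule core[OF finA finJ SJ disj ActA dv cv aff feas limI limJ Gc inact indep spanJS rc eps nofeas])
qed

end

context bil
begin

lemma isc:
  assumes xs: "\<forall>k. xs k \<in> X" "xs \<longlonglongrightarrow> xb" and xb: "xb \<in> X" and yb: "yb \<in> Sol f h l p xb"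
    and eps: "\<epsilon> > 0"
  shows "eventually (\<lambda>k. \<exists>y\<in>Sol f h l p (xs k). dist y yb < \<epsilon>) sequentially"
proof (rule ccontr)
  assume "\<not> ?thesis"
  then have "frequently (\<lambda>k. \<forall>y\<in>Sol f h l p (xs k). \<epsilon> \<le> dist y yb) sequentially"
    by (simp add: not_eventually not_less)
  from freq_subseq[OF this] obtain r :: "nat \<Rightarrow> nat" where r: "strict_mono r"
    "\<forall>n. \<forall>y\<in>Sol f h l p (xs (r n)). \<epsilon> \<le> dist y yb" by blast
  have xr: "(\<lambda>n. xs (r n)) \<longlonglongrightarrow> xb" using LIMSEQ_subseq_LIMSEQ[OF xs(2) r(1)] by (simp add: o_def)
  have "\<forall>n. xs (r n) \<in> X" using xs(1) by blast
  from isc_false[OF this xr xb yb eps r(2)] show False .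
qed

lemma exists_min: "\<exists>x\<in>X. \<forall>z\<in>X. phi_p F f h l p x \<le> phi_p F f h l p z"
proof -
  define m where "m = Inf (phi_p F f h l p ` X)"
  have "phi_p F f h l p ` X \<noteq> {}" using Xne by simp
  from Inf_countable_INF[OF this] obtain g where g: "decseq g" "range g \<subseteq> phi_p F f h l p ` X"
    "Inf (phi_p F f h l p ` X) = (INF i. g i)" by blast
  have gm: "g \<longlonglongrightarrow> m" using LIMSEQ_INF[OF g(1)] g(3) by (simp add: m_def)
  have "\<forall>k. \<exists>x. x \<in> X \<and> phi_p F f h l p x = g k" using g(2) by (metis image_iff rangeI subsetD)
  from choice[OF this] obtain xs where xs: "\<forall>k. xs k \<in> X \<and> phi_p F f h l p (xs k) = g k" by blast
  have "\<forall>n. xs n \<in> X" using xs by blast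
  then obtain xb r where xb: "xb \<in> X" and r: "strict_mono r" "(xs \<circ> r) \<longlonglongrightarrow> xb"
    using cX unfolding compact_def by blast
  define zs where "zs n = xs (r n)" for n
  have zsX: "\<forall>n. zs n \<in> X" using xs by (simp add: zs_def)
  have zeq: "zs = xs \<circ> r" by (simp add: zs_def fun_eq_iff)
  have zs: "zs \<longlonglongrightarrow> xb" using r(2) unfolding zeq .
  have zm: "(\<lambda>n. phi_p F f h l p (zs n)) \<longlonglongrightarrow> m"
    using LIMSEQ_subseq_LIMSEQ[OF gm r(1)] xs by (simp add: zs_def o_def)
  have le: "ereal (F (xb, y)) \<le> m" if y: "y \<in> Sol f h l p xb" for y
  proof (rule ereal_le_epsilon2)
    fix \<eta> :: real assume eta: "\<eta> > 0"
    obtain F' where F': "\<And>z. (F has_derivative blinfun_apply (F' z)) (at z)" using cF unfolding cont_diff_def by blast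
    have "continuous (at (xb, y)) F" using has_derivative_continuous[OF F'] .
    then obtain \<delta> where d: "\<delta> > 0" "\<forall>z. dist z (xb, y) < \<delta> \<longrightarrow> dist (F z) (F (xb, y)) < \<eta>"
      unfolding continuous_at_eps_delta using eta by blast
    have d2: "\<delta> / 2 > 0" using d by simp
    have ev1: "eventually (\<lambda>n. dist (zs n) xb < \<delta> / 2) sequentially" using tendstoD[OF zs d2] .
    have ev2: "eventually (\<lambda>n. \<exists>y'\<in>Sol f h l p (zs n). dist y' y < \<delta> / 2) sequentially"
      by (rule isc[OF zsX zs xb y d2])
    have ev: "eventually (\<lambda>n. ereal (F (xb, y) - \<eta>) \<le> phi_p F f h l p (zs n)) sequentially"
      using ev1 ev2
    proof eventually_elim
      case (elim n)
      obtain y' where y': "y' \<in> Sol f h l p (zs n)" "dist y' y < \<delta> / 2" using elim(2) by blast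
      have "dist (zs n, y') (xb, y) \<le> dist (zs n) xb + dist y' y" by (rule dist_pair_le)
      also have "\<dots> < \<delta>" using elim(1) y'(2) by simp
      finally have "dist (F (zs n, y')) (F (xb, y)) < \<eta>" using d(2) by blast
      then have "F (xb, y) - \<eta> \<le> F (zs n, y')" by (simp add: dist_real_def abs_less_iff)
      then have "ereal (F (xb, y) - \<eta>) \<le> ereal (F (zs n, y'))" by simp
      also have "\<dots> \<le> phi_p F f h l p (zs n)"
        unfolding phi_p_def using y'(1) by (intro Sup_upper) simp
      finally show ?case .
    qed
    have "ereal (F (xb, y) - \<eta>) \<le> m"
      using tendsto_lowerbound[OF zm ev trivial_limit_sequentially] .
    then show "ereal (F (xb, y)) \<le> m + ereal \<eta>"
      by (cases m) auto
  qed
  have "phi_p F f h l p xb \<le> m" unfolding phi_p_def using le by (intro Sup_least) auto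
  moreover have "m \<le> phi_p F f h l p z" if "z \<in> X" for z unfolding m_def using that by (intro Inf_lower) simp
  ultimately show ?thesis using xb by (meson order_trans)
qed

end

theorem theorem4p16:
  fixes F f :: "(real^'n) \<times> (real^'m) \<Rightarrow> real"
    and h :: "nat \<Rightarrow> (real^'n) \<times> (real^'m) \<Rightarrow> real"
    and l p :: nat
    and X :: "(real^'n) set"
  assumes "l \<le> p"
    and "cont_diff F" and "cont_diff f" and "\<forall>i\<in>{1..p}. cont_diff (h i)"
    and "closed X"
    and "\<forall>x. convex_on UNIV (\<lambda>y. f (x, y))"
    and "\<forall>x. \<forall>i\<in>{1..l}. convex_on UNIV (\<lambda>y. h i (x, y))"
    and "\<forall>x. \<forall>i\<in>{l+1..p}. \<exists>a b. \<forall>y. h i (x, y) = a \<bullet> y + b"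
    and "X \<subseteq> domG h l p"
    and "\<forall>x\<in>X. locally_bounded_at (Gam h l p) x"
    and "\<forall>x y. x \<in> X \<and> y \<in> Sol f h l p x \<longrightarrow> RCPLD_S f h l p (domG h l p) x y"
    and "X \<noteq> {}" and "compact X"
  shows "\<exists>x\<in>X. \<forall>z\<in>X. phi_p F f h l p x \<le> phi_p F f h l p z"
proof -
  interpret bil F f h l p X using assms by unfold_locales
  show ?thesis by (rule exists_min)
qed

end
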